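(* Let $(M,D,g,T)$ be a chronologically open sub-space-time. Then the set $\mathscr{B}=\{I^+(p)\cap I^-(q)\mid p,q\in M\}$ is the basis of a topology on $M$.
   Context: A sub-space-time is a quadruple $(M,D,g,T)$ where $M$ is a connected smooth manifold, $D$ is a smooth bracket-generating distribution on $M$ of rank $k$ with $2\le k<\dim M$, $g$ is a smoothly varying non-degenerate symmetric bilinear form on the fibres $D_p$ of index $1$, and $T$ is a globally defined smooth horizontal vector field with $g(T,T)<0$. A horizontal curve is an absolutely continuous curve with $\dot\gamma\in D$ a.e. and $\dot\gamma$ locally square integrable w.r.t. an auxiliary Riemannian metric; it is timelike future directed (t.f.d.) if a.e. $g(\dot\gamma,\dot\gamma)<0$ and $g(T,\dot\gamma)<0$. $p\ll q$ means there is a horizontal t.f.d. curve from $p$ to $q$; $I^+(p)=\{q:p\ll q\}$, $I^-(p)=\{q:q\ll p\}$. The sub-space-time is chronologically open if $I^+(p)$ and $I^-(p)$ are open in the manifold topology for all $p\in M$. *)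

theory Defs
  imports "HOL-Analysis.Analysis"
begin

text \<open>Smooth manifolds are modelled as embedded smooth submanifolds of a
Euclidean space 'e (no loss of generality by the Whitney embedding theorem).\<close>

fun Ck_on :: "nat \<Rightarrow> 'a::euclidean_space set \<Rightarrow> ('a \<Rightarrow> 'b::real_normed_vector) \<Rightarrow> bool" where
  "Ck_on 0 U f = continuous_on U f"
| "Ck_on (Suc k) U f = (\<exists>f'. (\<forall>x\<in>U. (f has_derivative f' x) (at x)) \<and> (\<forall>v. Ck_on k U (\<lambda>x. f' x v)))"

definition smooth_on :: "'a::euclidean_space set \<Rightarrow> ('a \<Rightarrow> 'b::real_normed_vector) \<Rightarrow> bool" where
  "smooth_on U f \<longleftrightarrow> (\<forall>k. Ck_on k U f)"

definition smooth_fun_on :: "'a::euclidean_space set \<Rightarrow> ('a \<Rightarrow> 'b::real_normed_vector) \<Rightarrow> bool" where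
  "smooth_fun_on S f \<longleftrightarrow> (\<forall>p\<in>S. \<exists>U h. open U \<and> p \<in> U \<and> smooth_on U h \<and> (\<forall>q\<in>S \<inter> U. f q = h q))"

definition submanifold :: "'d::euclidean_space itself \<Rightarrow> 'e::euclidean_space set \<Rightarrow> bool" where
  "submanifold _ M \<longleftrightarrow> (\<forall>p\<in>M. \<exists>(V::'d set) U \<phi> \<psi>. open V \<and> open U \<and> p \<in> U \<and>
      smooth_on V \<phi> \<and> (\<forall>x\<in>V. inj (frechet_derivative \<phi> (at x))) \<and>
      homeomorphism V (M \<inter> U) \<phi> \<psi>)"

definition tangent_space :: "'e::euclidean_space set \<Rightarrow> 'e \<Rightarrow> 'e set" where
  "tangent_space M p = {v. \<exists>c. c 0 = p \<and> (\<forall>t\<in>{-1<..<1}. c t \<in> M) \<and> (c has_vector_derivative v) (at 0)}"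

definition lie :: "('e::euclidean_space \<Rightarrow> 'e) \<Rightarrow> ('e \<Rightarrow> 'e) \<Rightarrow> 'e \<Rightarrow> 'e" where
  "lie X Y x = frechet_derivative Y (at x) (X x) - frechet_derivative X (at x) (Y x)"

inductive_set brackets :: "(nat \<Rightarrow> 'e::euclidean_space \<Rightarrow> 'e) \<Rightarrow> nat \<Rightarrow> ('e \<Rightarrow> 'e) set"
  for X k where
  gen: "i < k \<Longrightarrow> X i \<in> brackets X k"
| br: "Y \<in> brackets X k \<Longrightarrow> Z \<in> brackets X k \<Longrightarrow> lie Y Z \<in> brackets X k"

definition local_frame :: "'e::euclidean_space set \<Rightarrow> ('e \<Rightarrow> 'e set) \<Rightarrow> nat \<Rightarrow> 'e \<Rightarrow> 'e set \<Rightarrow> (nat \<Rightarrow> 'e \<Rightarrow> 'e) \<Rightarrow> bool" where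
  "local_frame M D k p U X \<longleftrightarrow> open U \<and> p \<in> U \<and> (\<forall>i<k. smooth_on U (X i)) \<and>
     (\<forall>q\<in>M \<inter> U. D q = span {X i q | i. i < k})"

definition smooth_distribution :: "'e::euclidean_space set \<Rightarrow> ('e \<Rightarrow> 'e set) \<Rightarrow> nat \<Rightarrow> bool" where
  "smooth_distribution M D k \<longleftrightarrow>
     (\<forall>p\<in>M. subspace (D p) \<and> D p \<subseteq> tangent_space M p \<and> dim (D p) = k) \<and>
     (\<forall>p\<in>M. \<exists>U X. local_frame M D k p U X)"

definition bracket_generating :: "'e::euclidean_space set \<Rightarrow> ('e \<Rightarrow> 'e set) \<Rightarrow> nat \<Rightarrow> bool" where
  "bracket_generating M D k \<longleftrightarrow>
     (\<forall>p\<in>M. \<exists>U X. local_frame M D k p U X \<and> span {Z p | Z. Z \<in> brackets X k} = tangent_space M p)"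

definition sub_lorentz_metric :: "'e::euclidean_space set \<Rightarrow> ('e \<Rightarrow> 'e set) \<Rightarrow> ('e \<Rightarrow> 'e \<Rightarrow> 'e \<Rightarrow> real) \<Rightarrow> bool" where
  "sub_lorentz_metric M D g \<longleftrightarrow>
    (\<forall>p\<in>M.
       (\<forall>u\<in>D p. \<forall>v\<in>D p. \<forall>w\<in>D p. \<forall>c::real.
          g p (u + v) w = g p u w + g p v w \<and> g p (c *\<^sub>R u) w = c * g p u w \<and> g p u v = g p v u) \<and>
       (\<forall>u\<in>D p. (\<forall>v\<in>D p. g p u v = 0) \<longrightarrow> u = 0) \<and>
       (\<exists>w\<in>D p. g p w w < 0) \<and>
       (\<forall>W. subspace W \<and> W \<subseteq> D p \<and> (\<forall>w\<in>W. w \<noteq> 0 \<longrightarrow> g p w w < 0) \<longrightarrow> dim W \<le> 1)) \<and>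
    (\<forall>U X Y. open U \<longrightarrow> smooth_on U X \<longrightarrow> smooth_on U Y \<longrightarrow>
       (\<forall>q\<in>M \<inter> U. X q \<in> D q \<and> Y q \<in> D q) \<longrightarrow>
       smooth_fun_on (M \<inter> U) (\<lambda>q. g q (X q) (Y q)))"

definition sub_space_time :: "'d::euclidean_space itself \<Rightarrow> 'e::euclidean_space set \<Rightarrow> ('e \<Rightarrow> 'e set) \<Rightarrow> nat \<Rightarrow>
    ('e \<Rightarrow> 'e \<Rightarrow> 'e \<Rightarrow> real) \<Rightarrow> ('e \<Rightarrow> 'e) \<Rightarrow> bool" where
  "sub_space_time d M D k g T \<longleftrightarrow>
     submanifold d M \<and> connected M \<and> 2 \<le> k \<and> k < DIM('d) \<and>
     smooth_distribution M D k \<and> bracket_generating M D k \<and> sub_lorentz_metric M D g \<and>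
     smooth_fun_on M T \<and> (\<forall>p\<in>M. T p \<in> D p \<and> g p (T p) (T p) < 0)"

definition abs_continuous_on :: "real \<Rightarrow> real \<Rightarrow> (real \<Rightarrow> 'e::metric_space) \<Rightarrow> bool" where
  "abs_continuous_on a b \<gamma> \<longleftrightarrow> (\<forall>\<epsilon>>0. \<exists>\<delta>>0. \<forall>n (s::nat \<Rightarrow> real) t.
     (\<forall>i<n. a \<le> s i \<and> s i \<le> t i \<and> t i \<le> b) \<and>
     (\<forall>i<n. \<forall>j<n. i \<noteq> j \<longrightarrow> t i \<le> s j \<or> t j \<le> s i) \<and>
     (\<Sum>i<n. t i - s i) < \<delta> \<longrightarrow> (\<Sum>i<n. dist (\<gamma> (s i)) (\<gamma> (t i))) < \<epsilon>)"

text \<open>Horizontal timelike future directed curve on [a,b]; on a compact interval,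
local square integrability w.r.t. any Riemannian metric is square integrability
of the Euclidean norm of the derivative.\<close>
definition tfd_curve :: "'e::euclidean_space set \<Rightarrow> ('e \<Rightarrow> 'e set) \<Rightarrow> ('e \<Rightarrow> 'e \<Rightarrow> 'e \<Rightarrow> real) \<Rightarrow> ('e \<Rightarrow> 'e) \<Rightarrow>
    real \<Rightarrow> real \<Rightarrow> (real \<Rightarrow> 'e) \<Rightarrow> bool" where
  "tfd_curve M D g T a b \<gamma> \<longleftrightarrow> \<gamma> ` {a..b} \<subseteq> M \<and> abs_continuous_on a b \<gamma> \<and>
     (\<exists>\<gamma>'. set_integrable lborel {a..b} (\<lambda>t. (norm (\<gamma>' t))\<^sup>2) \<and>
        (AE t in lborel. t \<in> {a..b} \<longrightarrow>
           (\<gamma> has_vector_derivative \<gamma>' t) (at t) \<and> \<gamma>' t \<in> D (\<gamma> t) \<and>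
           g (\<gamma> t) (\<gamma>' t) (\<gamma>' t) < 0 \<and> g (\<gamma> t) (T (\<gamma> t)) (\<gamma>' t) < 0))"

definition chron :: "'e::euclidean_space set \<Rightarrow> ('e \<Rightarrow> 'e set) \<Rightarrow> ('e \<Rightarrow> 'e \<Rightarrow> 'e \<Rightarrow> real) \<Rightarrow> ('e \<Rightarrow> 'e) \<Rightarrow>
    'e \<Rightarrow> 'e \<Rightarrow> bool" where
  "chron M D g T p q \<longleftrightarrow> (\<exists>a b \<gamma>. a < b \<and> tfd_curve M D g T a b \<gamma> \<and> \<gamma> a = p \<and> \<gamma> b = q)"

definition Ifut where "Ifut M D g T p = {q. chron M D g T p q}"
definition Ipast where "Ipast M D g T p = {q. chron M D g T q p}"

definition chronologically_open where
  "chronologically_open M D g T \<longleftrightarrow>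
     (\<forall>p\<in>M. openin (top_of_set M) (Ifut M D g T p) \<and> openin (top_of_set M) (Ipast M D g T p))"

end

theory Submission
  imports Defs
begin


definition Qc :: "('e::euclidean_space \<Rightarrow> 'e set) \<Rightarrow> ('e \<Rightarrow> 'e \<Rightarrow> 'e \<Rightarrow> real) \<Rightarrow> ('e \<Rightarrow> 'e) \<Rightarrow> (real \<Rightarrow> 'e) \<Rightarrow> (real \<Rightarrow> 'e) \<Rightarrow> real \<Rightarrow> bool" where
  "Qc D g T \<gamma> \<gamma>' t \<longleftrightarrow> (\<gamma> has_vector_derivative \<gamma>' t) (at t) \<and> \<gamma>' t \<in> D (\<gamma> t) \<and>
           g (\<gamma> t) (\<gamma>' t) (\<gamma>' t) < 0 \<and> g (\<gamma> t) (T (\<gamma> t)) (\<gamma>' t) < 0"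

lemma tfd_curve_alt: "tfd_curve M D g T a b \<gamma> \<longleftrightarrow> \<gamma> ` {a..b} \<subseteq> M \<and> abs_continuous_on a b \<gamma> \<and>
     (\<exists>\<gamma>'. set_integrable lborel {a..b} (\<lambda>t. (norm (\<gamma>' t))\<^sup>2) \<and>
        (AE t in lborel. t \<in> {a..b} \<longrightarrow> Qc D g T \<gamma> \<gamma>' t))"
  unfolding tfd_curve_def Qc_def by simp

lemma acE:
  assumes "abs_continuous_on a b \<gamma>" "e > 0"
  obtains \<delta> where "\<delta> > 0" "\<And>n (s::nat \<Rightarrow> real) t.
     (\<forall>i<n. a \<le> s i \<and> s i \<le> t i \<and> t i \<le> b) \<Longrightarrow>
     (\<forall>i<n. \<forall>j<n. i \<noteq> j \<longrightarrow> t i \<le> s j \<or> t j \<le> s i) \<Longrightarrow>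
     (\<Sum>i<n. t i - s i) < \<delta> \<Longrightarrow> (\<Sum>i<n. dist (\<gamma> (s i)) (\<gamma> (t i))) < e"
proof -
  from assms have "\<exists>\<delta>>0. \<forall>n (s::nat \<Rightarrow> real) t.
     (\<forall>i<n. a \<le> s i \<and> s i \<le> t i \<and> t i \<le> b) \<and>
     (\<forall>i<n. \<forall>j<n. i \<noteq> j \<longrightarrow> t i \<le> s j \<or> t j \<le> s i) \<and>
     (\<Sum>i<n. t i - s i) < \<delta> \<longrightarrow> (\<Sum>i<n. dist (\<gamma> (s i)) (\<gamma> (t i))) < e"
    unfolding abs_continuous_on_def by blast
  then obtain \<delta> where "\<delta> > 0" and H: "\<forall>n (s::nat \<Rightarrow> real) t.
     (\<forall>i<n. a \<le> s i \<and> s i \<le> t i \<and> t i \<le> b) \<and>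
     (\<forall>i<n. \<forall>j<n. i \<noteq> j \<longrightarrow> t i \<le> s j \<or> t j \<le> s i) \<and>
     (\<Sum>i<n. t i - s i) < \<delta> \<longrightarrow> (\<Sum>i<n. dist (\<gamma> (s i)) (\<gamma> (t i))) < e"
    by blast
  show ?thesis
  proof (rule that[OF \<open>\<delta> > 0\<close>])
    fix n and s t :: "nat \<Rightarrow> real"
    assume "\<forall>i<n. a \<le> s i \<and> s i \<le> t i \<and> t i \<le> b"
      "\<forall>i<n. \<forall>j<n. i \<noteq> j \<longrightarrow> t i \<le> s j \<or> t j \<le> s i" "(\<Sum>i<n. t i - s i) < \<delta>"
    then show "(\<Sum>i<n. dist (\<gamma> (s i)) (\<gamma> (t i))) < e"
      using H by blast
  qed
qed

lemma acI:
  assumes "\<And>e. e > 0 \<Longrightarrow> \<exists>\<delta>>0. \<forall>n (s::nat \<Rightarrow> real) t.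
     (\<forall>i<n. a \<le> s i \<and> s i \<le> t i \<and> t i \<le> b) \<longrightarrow>
     (\<forall>i<n. \<forall>j<n. i \<noteq> j \<longrightarrow> t i \<le> s j \<or> t j \<le> s i) \<longrightarrow>
     (\<Sum>i<n. t i - s i) < \<delta> \<longrightarrow> (\<Sum>i<n. dist (\<gamma> (s i)) (\<gamma> (t i))) < e"
  shows "abs_continuous_on a b \<gamma>"
  unfolding abs_continuous_on_def
proof (intro allI impI)
  fix e :: real assume "e > 0"
  from assms[OF this] obtain \<delta> where "\<delta> > 0" and H: "\<forall>n (s::nat \<Rightarrow> real) t.
     (\<forall>i<n. a \<le> s i \<and> s i \<le> t i \<and> t i \<le> b) \<longrightarrow>
     (\<forall>i<n. \<forall>j<n. i \<noteq> j \<longrightarrow> t i \<le> s j \<or> t j \<le> s i) \<longrightarrow>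
     (\<Sum>i<n. t i - s i) < \<delta> \<longrightarrow> (\<Sum>i<n. dist (\<gamma> (s i)) (\<gamma> (t i))) < e" by blast
  show "\<exists>\<delta>>0. \<forall>n (s::nat \<Rightarrow> real) t.
     (\<forall>i<n. a \<le> s i \<and> s i \<le> t i \<and> t i \<le> b) \<and>
     (\<forall>i<n. \<forall>j<n. i \<noteq> j \<longrightarrow> t i \<le> s j \<or> t j \<le> s i) \<and>
     (\<Sum>i<n. t i - s i) < \<delta> \<longrightarrow> (\<Sum>i<n. dist (\<gamma> (s i)) (\<gamma> (t i))) < e"
    using \<open>\<delta> > 0\<close> H by blast
qed

lemma ac_restrict:
  assumes "abs_continuous_on a b \<gamma>" "a \<le> c" "d \<le> b"
  shows "abs_continuous_on c d \<gamma>"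
proof (rule acI)
  fix e :: real assume "e > 0"
  from acE[OF assms(1) this] obtain \<delta> where "\<delta> > 0" and H: "\<And>n (s::nat \<Rightarrow> real) t.
     (\<forall>i<n. a \<le> s i \<and> s i \<le> t i \<and> t i \<le> b) \<Longrightarrow>
     (\<forall>i<n. \<forall>j<n. i \<noteq> j \<longrightarrow> t i \<le> s j \<or> t j \<le> s i) \<Longrightarrow>
     (\<Sum>i<n. t i - s i) < \<delta> \<Longrightarrow> (\<Sum>i<n. dist (\<gamma> (s i)) (\<gamma> (t i))) < e" by blast
  show "\<exists>\<delta>>0. \<forall>n (s::nat \<Rightarrow> real) t.
     (\<forall>i<n. c \<le> s i \<and> s i \<le> t i \<and> t i \<le> d) \<longrightarrow>
     (\<forall>i<n. \<forall>j<n. i \<noteq> j \<longrightarrow> t i \<le> s j \<or> t j \<le> s i) \<longrightarrow>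
     (\<Sum>i<n. t i - s i) < \<delta> \<longrightarrow> (\<Sum>i<n. dist (\<gamma> (s i)) (\<gamma> (t i))) < e"
  proof (intro exI[of _ \<delta>] conjI allI impI \<open>\<delta> > 0\<close>)
    fix n and s t :: "nat \<Rightarrow> real"
    assume A: "\<forall>i<n. c \<le> s i \<and> s i \<le> t i \<and> t i \<le> d"
      "\<forall>i<n. \<forall>j<n. i \<noteq> j \<longrightarrow> t i \<le> s j \<or> t j \<le> s i" "(\<Sum>i<n. t i - s i) < \<delta>"
    then have "\<forall>i<n. a \<le> s i \<and> s i \<le> t i \<and> t i \<le> b" using assms(2,3) by force
    with A H show "(\<Sum>i<n. dist (\<gamma> (s i)) (\<gamma> (t i))) < e" by blast
  qed
qed

lemma tfd_restrict:
  assumes "tfd_curve M D g T a b \<gamma>" "a \<le> c" "c \<le> d" "d \<le> b"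
  shows "tfd_curve M D g T c d \<gamma>"
proof -
  obtain \<gamma>' where i: "set_integrable lborel {a..b} (\<lambda>t. (norm (\<gamma>' t))\<^sup>2)"
    and ae: "AE t in lborel. t \<in> {a..b} \<longrightarrow> Qc D g T \<gamma> \<gamma>' t"
    using assms(1) unfolding tfd_curve_alt by blast
  have "set_integrable lborel {c..d} (\<lambda>t. (norm (\<gamma>' t))\<^sup>2)"
    by (rule set_integrable_subset[OF i]) (use assms in auto)
  moreover have "AE t in lborel. t \<in> {c..d} \<longrightarrow> Qc D g T \<gamma> \<gamma>' t"
    using ae by eventually_elim (use assms in auto)
  moreover have "\<gamma> ` {c..d} \<subseteq> M" using assms(1-4) unfolding tfd_curve_def by auto
  moreover have "abs_continuous_on c d \<gamma>"
    using ac_restrict assms unfolding tfd_curve_def by blast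
  ultimately show ?thesis unfolding tfd_curve_alt by blast
qed

lemma AE_translate:
  assumes "AE t in lborel. P (t::real)"
  shows "AE t in lborel. P (t - e)"
proof -
  obtain N where N: "N \<in> null_sets lborel" "{x \<in> space lborel. \<not> P x} \<subseteq> N"
    using assms unfolding eventually_ae_filter by blast
  have "{x. x - e \<in> N} \<in> null_sets lborel" by (rule null_sets_translation[OF N(1)])
  moreover have "{x \<in> space lborel. \<not> P (x - e)} \<subseteq> {x. x - e \<in> N}" using N(2) by auto
  ultimately show ?thesis unfolding eventually_ae_filter by blast
qed

lemma set_integrable_translate:
  fixes f :: "real \<Rightarrow> real"
  assumes "set_integrable lborel {a..b} f"
  shows "set_integrable lborel {a+e..b+e} (\<lambda>t. f (t - e))"
proof -
  have "integrable lborel (\<lambda>x. indicator {a..b} x *\<^sub>R f x)"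
    using assms unfolding set_integrable_def .
  note lborel_integrable_real_affine[OF this, of 1 "-e"]
  then have "integrable lborel (\<lambda>x. indicator {a..b} (-e + 1 * x) *\<^sub>R f (-e + 1 * x))"
    by (metis one_neq_zero)
  moreover have "(\<lambda>x. indicator {a..b} (-e + 1 * x) *\<^sub>R f (-e + 1 * x)) =
      (\<lambda>x. indicator {a+e..b+e} x *\<^sub>R f (x - e))"
    by (auto simp: indicator_def fun_eq_iff)
  ultimately show ?thesis unfolding set_integrable_def by simp
qed

lemma tfd_shift:
  assumes "tfd_curve M D g T a b \<gamma>"
  shows "tfd_curve M D g T (a+e) (b+e) (\<lambda>t. \<gamma> (t - e))"
proof -
  obtain \<gamma>' where i: "set_integrable lborel {a..b} (\<lambda>t. (norm (\<gamma>' t))\<^sup>2)"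
    and ae: "AE t in lborel. t \<in> {a..b} \<longrightarrow> Qc D g T \<gamma> \<gamma>' t"
    using assms(1) unfolding tfd_curve_alt by blast
  have i2: "set_integrable lborel {a+e..b+e} (\<lambda>t. (norm (\<gamma>' (t - e)))\<^sup>2)"
    using set_integrable_translate[OF i] by simp
  have ae2: "AE t in lborel. t \<in> {a+e..b+e} \<longrightarrow> Qc D g T (\<lambda>t. \<gamma> (t - e)) (\<lambda>t. \<gamma>' (t - e)) t"
    using AE_translate[OF ae, of e]
  proof eventually_elim
    case (elim t)
    show ?case
    proof
      assume "t \<in> {a+e..b+e}"
      then have q: "Qc D g T \<gamma> \<gamma>' (t - e)" using elim by auto
      have d1: "((\<lambda>t. t - e) has_vector_derivative 1) (at t)"
        by (auto intro!: derivative_eq_intros simp: has_vector_derivative_def)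
      have "(\<gamma> has_vector_derivative \<gamma>' (t - e)) (at ((\<lambda>t. t - e) t))" using q unfolding Qc_def by simp
      from vector_diff_chain_at[OF d1 this]
      have "((\<lambda>t. \<gamma> (t - e)) has_vector_derivative \<gamma>' (t - e)) (at t)" by (simp add: o_def)
      then show "Qc D g T (\<lambda>t. \<gamma> (t - e)) (\<lambda>t. \<gamma>' (t - e)) t" using q unfolding Qc_def by simp
    qed
  qed
  have im: "(\<lambda>t. \<gamma> (t - e)) ` {a+e..b+e} \<subseteq> M"
  proof -
    have "(\<lambda>t. \<gamma> (t - e)) ` {a+e..b+e} \<subseteq> \<gamma> ` {a..b}" by force
    then show ?thesis using assms unfolding tfd_curve_def by auto
  qed
  have ac: "abs_continuous_on (a+e) (b+e) (\<lambda>t. \<gamma> (t - e))"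
  proof (rule acI)
    fix \<epsilon> :: real assume "\<epsilon> > 0"
    have "abs_continuous_on a b \<gamma>" using assms unfolding tfd_curve_def by blast
    from acE[OF this \<open>\<epsilon> > 0\<close>] obtain \<delta> where "\<delta> > 0" and H: "\<And>n (s::nat \<Rightarrow> real) t.
       (\<forall>i<n. a \<le> s i \<and> s i \<le> t i \<and> t i \<le> b) \<Longrightarrow>
       (\<forall>i<n. \<forall>j<n. i \<noteq> j \<longrightarrow> t i \<le> s j \<or> t j \<le> s i) \<Longrightarrow>
       (\<Sum>i<n. t i - s i) < \<delta> \<Longrightarrow> (\<Sum>i<n. dist (\<gamma> (s i)) (\<gamma> (t i))) < \<epsilon>" by blast
    show "\<exists>\<delta>>0. \<forall>n (s::nat \<Rightarrow> real) t.
       (\<forall>i<n. a+e \<le> s i \<and> s i \<le> t i \<and> t i \<le> b+e) \<longrightarrow>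
       (\<forall>i<n. \<forall>j<n. i \<noteq> j \<longrightarrow> t i \<le> s j \<or> t j \<le> s i) \<longrightarrow>
       (\<Sum>i<n. t i - s i) < \<delta> \<longrightarrow> (\<Sum>i<n. dist ((\<lambda>t. \<gamma> (t - e)) (s i)) ((\<lambda>t. \<gamma> (t - e)) (t i))) < \<epsilon>"
    proof (intro exI[of _ \<delta>] conjI allI impI \<open>\<delta> > 0\<close>)
      fix n and s t :: "nat \<Rightarrow> real"
      assume A: "\<forall>i<n. a+e \<le> s i \<and> s i \<le> t i \<and> t i \<le> b+e"
       "\<forall>i<n. \<forall>j<n. i \<noteq> j \<longrightarrow> t i \<le> s j \<or> t j \<le> s i" "(\<Sum>i<n. t i - s i) < \<delta>"
      have "(\<Sum>i<n. (t i - e) - (s i - e)) < \<delta>" using A by simp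
      moreover have "\<forall>i<n. a \<le> s i - e \<and> s i - e \<le> t i - e \<and> t i - e \<le> b" using A(1) by force
      moreover have "\<forall>i<n. \<forall>j<n. i \<noteq> j \<longrightarrow> t i - e \<le> s j - e \<or> t j - e \<le> s i - e" using A(2) by force
      ultimately show "(\<Sum>i<n. dist ((\<lambda>t. \<gamma> (t - e)) (s i)) ((\<lambda>t. \<gamma> (t - e)) (t i))) < \<epsilon>"
        using H[of n "\<lambda>i. s i - e" "\<lambda>i. t i - e"] by simp
    qed
  qed
  show ?thesis unfolding tfd_curve_alt
    by (intro conjI exI[of _ "\<lambda>t. \<gamma>' (t - e)"] im ac i2 ae2)
qed


lemma ac_concat:
  assumes ac1: "abs_continuous_on a b \<gamma>1" and ac2: "abs_continuous_on b d \<gamma>2"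
    and ab: "a \<le> b" and bd: "b \<le> d" and eq: "\<gamma>1 b = \<gamma>2 b"
  shows "abs_continuous_on a d (\<lambda>t. if t \<le> b then \<gamma>1 t else \<gamma>2 t)"
proof (rule acI)
  fix e :: real assume "e > 0"
  then have e2: "e/2 > 0" by simp
  from acE[OF ac1 e2] obtain \<delta>1 where "\<delta>1 > 0" and H1: "\<And>n (s::nat \<Rightarrow> real) t.
     (\<forall>i<n. a \<le> s i \<and> s i \<le> t i \<and> t i \<le> b) \<Longrightarrow>
     (\<forall>i<n. \<forall>j<n. i \<noteq> j \<longrightarrow> t i \<le> s j \<or> t j \<le> s i) \<Longrightarrow>
     (\<Sum>i<n. t i - s i) < \<delta>1 \<Longrightarrow> (\<Sum>i<n. dist (\<gamma>1 (s i)) (\<gamma>1 (t i))) < e/2" by blast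
  from acE[OF ac2 e2] obtain \<delta>2 where "\<delta>2 > 0" and H2: "\<And>n (s::nat \<Rightarrow> real) t.
     (\<forall>i<n. b \<le> s i \<and> s i \<le> t i \<and> t i \<le> d) \<Longrightarrow>
     (\<forall>i<n. \<forall>j<n. i \<noteq> j \<longrightarrow> t i \<le> s j \<or> t j \<le> s i) \<Longrightarrow>
     (\<Sum>i<n. t i - s i) < \<delta>2 \<Longrightarrow> (\<Sum>i<n. dist (\<gamma>2 (s i)) (\<gamma>2 (t i))) < e/2" by blast
  let ?\<gamma> = "\<lambda>t. if t \<le> b then \<gamma>1 t else \<gamma>2 t"
  show "\<exists>\<delta>>0. \<forall>n (s::nat \<Rightarrow> real) t.
     (\<forall>i<n. a \<le> s i \<and> s i \<le> t i \<and> t i \<le> d) \<longrightarrow>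
     (\<forall>i<n. \<forall>j<n. i \<noteq> j \<longrightarrow> t i \<le> s j \<or> t j \<le> s i) \<longrightarrow>
     (\<Sum>i<n. t i - s i) < \<delta> \<longrightarrow> (\<Sum>i<n. dist (?\<gamma> (s i)) (?\<gamma> (t i))) < e"
  proof (intro exI[of _ "min \<delta>1 \<delta>2"] conjI allI impI)
    show "min \<delta>1 \<delta>2 > 0" using \<open>\<delta>1 > 0\<close> \<open>\<delta>2 > 0\<close> by simp
    fix n and s t :: "nat \<Rightarrow> real"
    assume A: "\<forall>i<n. a \<le> s i \<and> s i \<le> t i \<and> t i \<le> d"
      "\<forall>i<n. \<forall>j<n. i \<noteq> j \<longrightarrow> t i \<le> s j \<or> t j \<le> s i" "(\<Sum>i<n. t i - s i) < min \<delta>1 \<delta>2"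
    define s1 where "s1 i = min (s i) b" for i
    define t1 where "t1 i = min (t i) b" for i
    define s2 where "s2 i = max (s i) b" for i
    define t2 where "t2 i = max (t i) b" for i
    have "(\<Sum>i<n. t1 i - s1 i) \<le> (\<Sum>i<n. t i - s i)"
      by (rule sum_mono) (use A(1) in \<open>auto simp: s1_def t1_def\<close>)
    then have sum1: "(\<Sum>i<n. t1 i - s1 i) < \<delta>1" using A(3) by linarith
    have bd1: "\<forall>i<n. a \<le> s1 i \<and> s1 i \<le> t1 i \<and> t1 i \<le> b"
      using A(1) ab by (auto simp: s1_def t1_def)
    have dj1: "\<forall>i<n. \<forall>j<n. i \<noteq> j \<longrightarrow> t1 i \<le> s1 j \<or> t1 j \<le> s1 i"
    proof (intro allI impI)
      fix i j assume "i < n" "j < n" "i \<noteq> j"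
      then have "t i \<le> s j \<or> t j \<le> s i" using A(2) by blast
      then show "t1 i \<le> s1 j \<or> t1 j \<le> s1 i"
        unfolding s1_def t1_def by (auto intro: min.mono)
    qed
    have S1: "(\<Sum>i<n. dist (\<gamma>1 (s1 i)) (\<gamma>1 (t1 i))) < e/2"
      by (rule H1[OF bd1 dj1 sum1])
    have "(\<Sum>i<n. t2 i - s2 i) \<le> (\<Sum>i<n. t i - s i)"
      by (rule sum_mono) (use A(1) in \<open>auto simp: s2_def t2_def\<close>)
    then have sum2: "(\<Sum>i<n. t2 i - s2 i) < \<delta>2" using A(3) by linarith
    have bd2: "\<forall>i<n. b \<le> s2 i \<and> s2 i \<le> t2 i \<and> t2 i \<le> d"
      using A(1) bd by (auto simp: s2_def t2_def)
    have dj2: "\<forall>i<n. \<forall>j<n. i \<noteq> j \<longrightarrow> t2 i \<le> s2 j \<or> t2 j \<le> s2 i"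
    proof (intro allI impI)
      fix i j assume "i < n" "j < n" "i \<noteq> j"
      then have "t i \<le> s j \<or> t j \<le> s i" using A(2) by blast
      then show "t2 i \<le> s2 j \<or> t2 j \<le> s2 i"
        unfolding s2_def t2_def by (auto intro: max.mono)
    qed
    have S2: "(\<Sum>i<n. dist (\<gamma>2 (s2 i)) (\<gamma>2 (t2 i))) < e/2"
      by (rule H2[OF bd2 dj2 sum2])
    have pt: "dist (?\<gamma> (s i)) (?\<gamma> (t i)) \<le> dist (\<gamma>1 (s1 i)) (\<gamma>1 (t1 i)) + dist (\<gamma>2 (s2 i)) (\<gamma>2 (t2 i))"
      if "i < n" for i
    proof -
      have st: "s i \<le> t i" using A(1) that by auto
      consider "t i \<le> b" | "b < s i" | "s i \<le> b" "b < t i" using st by linarith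
      then show ?thesis
      proof cases
        case 1 then show ?thesis using st by (simp add: s1_def t1_def s2_def t2_def)
      next
        case 2 then show ?thesis using st by (simp add: s1_def t1_def s2_def t2_def)
      next
        case 3
        then have "dist (?\<gamma> (s i)) (?\<gamma> (t i)) = dist (\<gamma>1 (s i)) (\<gamma>2 (t i))" by simp
        also have "\<dots> \<le> dist (\<gamma>1 (s i)) (\<gamma>1 b) + dist (\<gamma>2 b) (\<gamma>2 (t i))"
          using dist_triangle[of "\<gamma>1 (s i)" "\<gamma>2 (t i)" "\<gamma>1 b"] eq by simp
        finally show ?thesis using 3 by (simp add: s1_def t1_def s2_def t2_def)
      qed
    qed
    have "(\<Sum>i<n. dist (?\<gamma> (s i)) (?\<gamma> (t i))) \<le>
        (\<Sum>i<n. dist (\<gamma>1 (s1 i)) (\<gamma>1 (t1 i))) + (\<Sum>i<n. dist (\<gamma>2 (s2 i)) (\<gamma>2 (t2 i)))"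
      unfolding sum.distrib[symmetric] by (rule sum_mono) (use pt in auto)
    with S1 S2 show "(\<Sum>i<n. dist (?\<gamma> (s i)) (?\<gamma> (t i))) < e" by linarith
  qed
qed

lemma tfd_concat:
  assumes c1: "tfd_curve M D g T a b \<gamma>1" and c2: "tfd_curve M D g T b d \<gamma>2"
    and ab: "a \<le> b" and bd: "b \<le> d" and eq: "\<gamma>1 b = \<gamma>2 b"
  shows "tfd_curve M D g T a d (\<lambda>t. if t \<le> b then \<gamma>1 t else \<gamma>2 t)"
proof -
  let ?\<gamma> = "\<lambda>t. if t \<le> b then \<gamma>1 t else \<gamma>2 t"
  obtain \<gamma>1' where i1: "set_integrable lborel {a..b} (\<lambda>t. (norm (\<gamma>1' t))\<^sup>2)"
    and ae1: "AE t in lborel. t \<in> {a..b} \<longrightarrow> Qc D g T \<gamma>1 \<gamma>1' t"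
    using c1 unfolding tfd_curve_alt by blast
  obtain \<gamma>2' where i2: "set_integrable lborel {b..d} (\<lambda>t. (norm (\<gamma>2' t))\<^sup>2)"
    and ae2: "AE t in lborel. t \<in> {b..d} \<longrightarrow> Qc D g T \<gamma>2 \<gamma>2' t"
    using c2 unfolding tfd_curve_alt by blast
  define \<gamma>' where "\<gamma>' t = (if t \<le> b then \<gamma>1' t else \<gamma>2' t)" for t
  have ia: "set_integrable lborel {a..b} (\<lambda>t. (norm (\<gamma>' t))\<^sup>2)"
  proof -
    have "(\<lambda>x. indicator {a..b} x *\<^sub>R (norm (\<gamma>1' x))\<^sup>2) = (\<lambda>x. indicator {a..b} x *\<^sub>R (norm (\<gamma>' x))\<^sup>2)"
      by (auto simp: fun_eq_iff indicator_def \<gamma>'_def)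
    then show ?thesis using i1 unfolding set_integrable_def by simp
  qed
  have ib: "set_integrable lborel {b<..d} (\<lambda>t. (norm (\<gamma>' t))\<^sup>2)"
  proof -
    have "set_integrable lborel {b<..d} (\<lambda>t. (norm (\<gamma>2' t))\<^sup>2)"
      by (rule set_integrable_subset[OF i2]) auto
    moreover have "(\<lambda>x. indicator {b<..d} x *\<^sub>R (norm (\<gamma>2' x))\<^sup>2) = (\<lambda>x. indicator {b<..d} x *\<^sub>R (norm (\<gamma>' x))\<^sup>2)"
      by (auto simp: fun_eq_iff indicator_def \<gamma>'_def)
    ultimately show ?thesis unfolding set_integrable_def by simp
  qed
  have "set_integrable lborel ({a..b} \<union> {b<..d}) (\<lambda>t. (norm (\<gamma>' t))\<^sup>2)"
    by (rule set_integrable_Un[OF ia ib]) auto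
  moreover have "{a..b} \<union> {b<..d} = {a..d}" using ab bd by auto
  ultimately have i: "set_integrable lborel {a..d} (\<lambda>t. (norm (\<gamma>' t))\<^sup>2)" by simp
  have ae: "AE t in lborel. t \<in> {a..d} \<longrightarrow> Qc D g T ?\<gamma> \<gamma>' t"
    using ae1 ae2 AE_lborel_singleton[of b]
  proof eventually_elim
    case (elim t)
    show ?case
    proof
      assume t: "t \<in> {a..d}"
      show "Qc D g T ?\<gamma> \<gamma>' t"
      proof (cases "t < b")
        case True
        then have q: "Qc D g T \<gamma>1 \<gamma>1' t" using elim t by auto
        have "(?\<gamma> has_vector_derivative \<gamma>1' t) (at t)"
          by (rule has_vector_derivative_transform_within_open[of \<gamma>1 _ _ "{..<b}"])
             (use q True in \<open>auto simp: Qc_def\<close>)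
        then show ?thesis using q True unfolding Qc_def \<gamma>'_def by simp
      next
        case False
        then have tb: "t > b" using elim by auto
        then have q: "Qc D g T \<gamma>2 \<gamma>2' t" using elim t by auto
        have "(?\<gamma> has_vector_derivative \<gamma>2' t) (at t)"
          by (rule has_vector_derivative_transform_within_open[of \<gamma>2 _ _ "{b<..}"])
             (use q tb in \<open>auto simp: Qc_def\<close>)
        then show ?thesis using q tb unfolding Qc_def \<gamma>'_def by simp
      qed
    qed
  qed
  have im: "?\<gamma> ` {a..d} \<subseteq> M"
    using c1 c2 unfolding tfd_curve_def by (auto simp: image_subset_iff)
  have ac: "abs_continuous_on a d ?\<gamma>"
    by (rule ac_concat) (use c1 c2 ab bd eq in \<open>auto simp: tfd_curve_def\<close>)
  show ?thesis unfolding tfd_curve_alt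
    by (intro conjI exI[of _ \<gamma>'] im ac i ae)
qed

lemma chron_trans:
  assumes "chron M D g T p q" "chron M D g T q r"
  shows "chron M D g T p r"
proof -
  obtain a b \<gamma>1 where 1: "a < b" "tfd_curve M D g T a b \<gamma>1" "\<gamma>1 a = p" "\<gamma>1 b = q"
    using assms(1) unfolding chron_def by blast
  obtain c d \<gamma>2 where 2: "c < d" "tfd_curve M D g T c d \<gamma>2" "\<gamma>2 c = q" "\<gamma>2 d = r"
    using assms(2) unfolding chron_def by blast
  have s: "tfd_curve M D g T (c + (b - c)) (d + (b - c)) (\<lambda>t. \<gamma>2 (t - (b - c)))"
    by (rule tfd_shift[OF 2(2)])
  have s': "tfd_curve M D g T b (d + (b - c)) (\<lambda>t. \<gamma>2 (t - (b - c)))"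
    using s by simp
  have "tfd_curve M D g T a (d + (b - c)) (\<lambda>t. if t \<le> b then \<gamma>1 t else \<gamma>2 (t - (b - c)))"
    by (rule tfd_concat[OF 1(2) s']) (use 1 2 in auto)
  moreover have "(\<lambda>t. if t \<le> b then \<gamma>1 t else \<gamma>2 (t - (b - c))) a = p" using 1 by simp
  moreover have "(\<lambda>t. if t \<le> b then \<gamma>1 t else \<gamma>2 (t - (b - c))) (d + (b - c)) = r" using 1 2 by simp
  moreover have "a < d + (b - c)" using 1 2 by simp
  ultimately show ?thesis unfolding chron_def by blast
qed

lemma ac_continuous:
  assumes "abs_continuous_on a b \<gamma>"
  shows "continuous_on {a..b} \<gamma>"
  unfolding continuous_on_iff
proof (intro ballI allI impI)
  fix x e assume x: "x \<in> {a..b}" and e: "(e::real) > 0"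
  from acE[OF assms e] obtain \<delta> where "\<delta> > 0" and H: "\<And>n (s::nat \<Rightarrow> real) t.
     (\<forall>i<n. a \<le> s i \<and> s i \<le> t i \<and> t i \<le> b) \<Longrightarrow>
     (\<forall>i<n. \<forall>j<n. i \<noteq> j \<longrightarrow> t i \<le> s j \<or> t j \<le> s i) \<Longrightarrow>
     (\<Sum>i<n. t i - s i) < \<delta> \<Longrightarrow> (\<Sum>i<n. dist (\<gamma> (s i)) (\<gamma> (t i))) < e" by blast
  show "\<exists>d>0. \<forall>x'\<in>{a..b}. dist x' x < d \<longrightarrow> dist (\<gamma> x') (\<gamma> x) < e"
  proof (intro exI[of _ \<delta>] conjI ballI impI \<open>\<delta> > 0\<close>)
    fix y assume y: "y \<in> {a..b}" and d: "dist y x < \<delta>"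
    have aux: "dist (\<gamma> u) (\<gamma> v) < e" if "a \<le> u" "u \<le> v" "v \<le> b" "v - u < \<delta>" for u v
      using H[of 1 "\<lambda>_. u" "\<lambda>_. v"] that by simp
    show "dist (\<gamma> y) (\<gamma> x) < e"
    proof (cases "x \<le> y")
      case True then show ?thesis using aux[of x y] x y d by (auto simp: dist_real_def dist_commute)
    next
      case False then show ?thesis using aux[of y x] x y d by (auto simp: dist_real_def dist_commute)
    qed
  qed
qed

lemma tfd_continuous: "tfd_curve M D g T a b \<gamma> \<Longrightarrow> continuous_on {a..b} \<gamma>"
  unfolding tfd_curve_def using ac_continuous by blast


lemma chron_in_M: "chron M D g T p q \<Longrightarrow> p \<in> M \<and> q \<in> M"
  unfolding chron_def tfd_curve_def by force

lemma near_future: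
  assumes "chron M D g T p x" "openin (top_of_set M) Op" "x \<in> Op"
  shows "\<exists>p'\<in>Op. chron M D g T p p' \<and> chron M D g T p' x"
proof -
  obtain a b \<gamma> where c: "a < b" "tfd_curve M D g T a b \<gamma>" "\<gamma> a = p" "\<gamma> b = x"
    using assms(1) unfolding chron_def by blast
  obtain G where G: "open G" "Op = M \<inter> G" using assms(2) by (auto simp: openin_open)
  obtain e where e: "e > 0" "ball x e \<subseteq> G" using G assms(3) open_contains_ball by blast
  have cont: "continuous_on {a..b} \<gamma>" by (rule tfd_continuous[OF c(2)])
  obtain d where d: "d > 0" "\<And>t. t \<in> {a..b} \<Longrightarrow> dist t b < d \<Longrightarrow> dist (\<gamma> t) (\<gamma> b) < e"
    using cont e(1) c(1) unfolding continuous_on_iff by (meson atLeastAtMost_iff less_imp_le order_refl)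
  define t where "t = max (a + (b - a)/2) (b - d/2)"
  have m: "a < a + (b-a)/2 \<and> a + (b-a)/2 < b" using c(1) by (simp add: field_simps)
  have t: "a < t" "t < b" using m c(1) d(1) unfolding t_def
    by (simp_all add: less_max_iff_disj max_less_iff_conj min_less_iff_disj)
  have "dist t b < d" using t d(1) by (auto simp: t_def dist_real_def)
  then have "dist (\<gamma> t) x < e" using d(2)[of t] t c(4) by auto
  then have "\<gamma> t \<in> G" using e(2) by (auto simp: dist_commute)
  moreover have "\<gamma> t \<in> M" using c(2) t unfolding tfd_curve_def by auto
  moreover have "chron M D g T p (\<gamma> t)"
    unfolding chron_def using tfd_restrict[OF c(2), of a t] t c by auto
  moreover have "chron M D g T (\<gamma> t) x"
    unfolding chron_def using tfd_restrict[OF c(2), of t b] t c by auto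
  ultimately show ?thesis using G by blast
qed

lemma near_past:
  assumes "chron M D g T x q" "openin (top_of_set M) Op" "x \<in> Op"
  shows "\<exists>q'\<in>Op. chron M D g T x q' \<and> chron M D g T q' q"
proof -
  obtain a b \<gamma> where c: "a < b" "tfd_curve M D g T a b \<gamma>" "\<gamma> a = x" "\<gamma> b = q"
    using assms(1) unfolding chron_def by blast
  obtain G where G: "open G" "Op = M \<inter> G" using assms(2) by (auto simp: openin_open)
  obtain e where e: "e > 0" "ball x e \<subseteq> G" using G assms(3) open_contains_ball by blast
  have cont: "continuous_on {a..b} \<gamma>" by (rule tfd_continuous[OF c(2)])
  obtain d where d: "d > 0" "\<And>t. t \<in> {a..b} \<Longrightarrow> dist t a < d \<Longrightarrow> dist (\<gamma> t) (\<gamma> a) < e"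
    using cont e(1) c(1) unfolding continuous_on_iff by (meson atLeastAtMost_iff less_imp_le order_refl)
  define t where "t = min (a + (b - a)/2) (a + d/2)"
  have m: "a < a + (b-a)/2 \<and> a + (b-a)/2 < b" using c(1) by (simp add: field_simps)
  have t: "a < t" "t < b" using m c(1) d(1) unfolding t_def
    by (simp_all add: less_max_iff_disj max_less_iff_conj min_less_iff_disj)
  have "dist t a < d" using t d(1) by (auto simp: t_def dist_real_def)
  then have "dist (\<gamma> t) x < e" using d(2)[of t] t c(3) by auto
  then have "\<gamma> t \<in> G" using e(2) by (auto simp: dist_commute)
  moreover have "\<gamma> t \<in> M" using c(2) t unfolding tfd_curve_def by auto
  moreover have "chron M D g T x (\<gamma> t)"
    unfolding chron_def using tfd_restrict[OF c(2), of a t] t c by auto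
  moreover have "chron M D g T (\<gamma> t) q"
    unfolding chron_def using tfd_restrict[OF c(2), of t b] t c by auto
  ultimately show ?thesis using G by blast
qed

lemma topology_part:
  assumes co: "chronologically_open M D g T"
    and through: "\<And>x. x \<in> M \<Longrightarrow> \<exists>a b. chron M D g T a x \<and> chron M D g T x b"
  shows "\<exists>X :: 'e::euclidean_space topology. topspace X = M \<and>
           (\<forall>p\<in>M. \<forall>q\<in>M. openin X (Ifut M D g T p \<inter> Ipast M D g T q)) \<and>
           (\<forall>U. openin X U \<longrightarrow>
              (\<exists>\<B>. \<B> \<subseteq> {Ifut M D g T p \<inter> Ipast M D g T q | p q. p \<in> M \<and> q \<in> M} \<and> \<Union>\<B> = U))"
proof -
  define B where "B = {Ifut M D g T p \<inter> Ipast M D g T q | p q. p \<in> M \<and> q \<in> M}"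
  define P where "P U \<longleftrightarrow> U \<subseteq> M \<and> (\<forall>x\<in>U. \<exists>W\<in>B. x \<in> W \<and> W \<subseteq> U)" for U
  have BM: "W \<subseteq> M" if "W \<in> B" for W
    using that chron_in_M unfolding B_def Ifut_def by fastforce
  have key: "\<exists>W\<in>B. x \<in> W \<and> W \<subseteq> W1 \<inter> W2" if hW: "W1 \<in> B" "W2 \<in> B" "x \<in> W1 \<inter> W2" for W1 W2 x
  proof -
    obtain p1 q1 where 1: "W1 = Ifut M D g T p1 \<inter> Ipast M D g T q1" "p1 \<in> M" "q1 \<in> M"
      using hW(1) unfolding B_def by force
    obtain p2 q2 where 2: "W2 = Ifut M D g T p2 \<inter> Ipast M D g T q2" "p2 \<in> M" "q2 \<in> M"
      using hW(2) unfolding B_def by force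
    have O1: "openin (top_of_set M) (Ifut M D g T p1 \<inter> Ifut M D g T p2)"
      using co 1 2 unfolding chronologically_open_def by blast
    have O2: "openin (top_of_set M) (Ipast M D g T q1 \<inter> Ipast M D g T q2)"
      using co 1 2 unfolding chronologically_open_def by blast
    have x: "chron M D g T p1 x" "chron M D g T p2 x" "chron M D g T x q1" "chron M D g T x q2"
      using hW(3) 1 2 unfolding Ifut_def Ipast_def by auto
    obtain p' where p': "p' \<in> Ifut M D g T p1 \<inter> Ifut M D g T p2" "chron M D g T p' x"
      using near_future[OF x(1) O1] x by (auto simp: Ifut_def)
    obtain q' where q': "q' \<in> Ipast M D g T q1 \<inter> Ipast M D g T q2" "chron M D g T x q'"
      using near_past[OF x(3) O2] x by (auto simp: Ipast_def)
    have "p' \<in> M" "q' \<in> M" using p' q' chron_in_M by metis+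
    then have "Ifut M D g T p' \<inter> Ipast M D g T q' \<in> B" unfolding B_def by blast
    moreover have "x \<in> Ifut M D g T p' \<inter> Ipast M D g T q'" using p' q' by (auto simp: Ifut_def Ipast_def)
    moreover have "Ifut M D g T p' \<inter> Ipast M D g T q' \<subseteq> W1 \<inter> W2"
      using p' q' 1 2 by (auto simp: Ifut_def Ipast_def intro: chron_trans)
    ultimately show ?thesis by blast
  qed
  have isT: "istopology P"
    unfolding istopology_def
  proof (intro conjI allI impI ballI)
    fix S T assume "P S" "P T"
    then show "P (S \<inter> T)" unfolding P_def
    proof (intro conjI ballI)
      fix x assume H: "S \<subseteq> M \<and> (\<forall>x\<in>S. \<exists>W\<in>B. x \<in> W \<and> W \<subseteq> S)"
        "T \<subseteq> M \<and> (\<forall>x\<in>T. \<exists>W\<in>B. x \<in> W \<and> W \<subseteq> T)" and x: "x \<in> S \<inter> T"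
      then obtain W1 W2 where W: "W1 \<in> B" "x \<in> W1" "W1 \<subseteq> S" "W2 \<in> B" "x \<in> W2" "W2 \<subseteq> T" by blast
      then obtain W where "W \<in> B" "x \<in> W" "W \<subseteq> W1 \<inter> W2" using key[of W1 W2 x] by blast
      then show "\<exists>W\<in>B. x \<in> W \<and> W \<subseteq> S \<inter> T" using W by blast
    qed (use \<open>P S\<close> in \<open>auto simp: P_def\<close>)
  next
    fix K assume "\<forall>K\<in>K. P K"
    then show "P (\<Union>K)" unfolding P_def by (meson Union_iff Union_least Union_upper order_trans)
  qed
  define X where "X = topology P"
  have oX: "openin X = P" unfolding X_def using isT by simp
  have PM: "P M"
    unfolding P_def
  proof (intro conjI ballI order_refl)
    fix x assume "x \<in> M"
    then obtain a b where ab: "chron M D g T a x" "chron M D g T x b" using through by blast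
    then have "a \<in> M" "b \<in> M" using chron_in_M by metis+
    then have "Ifut M D g T a \<inter> Ipast M D g T b \<in> B" unfolding B_def by blast
    moreover have "x \<in> Ifut M D g T a \<inter> Ipast M D g T b" using ab by (auto simp: Ifut_def Ipast_def)
    ultimately show "\<exists>W\<in>B. x \<in> W \<and> W \<subseteq> M" using BM by blast
  qed
  have "topspace X = M"
  proof -
    have "topspace X = \<Union>{U. P U}" unfolding topspace_def oX by simp
    also have "\<dots> = M" using PM unfolding P_def by blast
    finally show ?thesis .
  qed
  moreover have "\<forall>p\<in>M. \<forall>q\<in>M. openin X (Ifut M D g T p \<inter> Ipast M D g T q)"
  proof (intro ballI)
    fix p q assume "p \<in> M" "q \<in> M"
    then have W: "Ifut M D g T p \<inter> Ipast M D g T q \<in> B" unfolding B_def by blast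
    show "openin X (Ifut M D g T p \<inter> Ipast M D g T q)" unfolding oX P_def
      using W BM by blast
  qed
  moreover have "\<forall>U. openin X U \<longrightarrow> (\<exists>\<B>. \<B> \<subseteq> B \<and> \<Union>\<B> = U)"
  proof (intro allI impI)
    fix U assume "openin X U"
    then have "P U" using oX by simp
    then show "\<exists>\<B>. \<B> \<subseteq> B \<and> \<Union>\<B> = U"
      by (intro exI[of _ "{W\<in>B. W \<subseteq> U}"]) (auto simp: P_def)
  qed
  ultimately show ?thesis unfolding B_def by blast
qed



lemma lipschitz_from_deriv:
  fixes \<gamma> :: "real \<Rightarrow> 'e::euclidean_space"
  assumes "continuous_on {a..b} \<gamma>'"
    and "\<And>t. t \<in> {a..b} \<Longrightarrow> (\<gamma> has_vector_derivative \<gamma>' t) (at t within {a..b})"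
  obtains B where "B \<ge> 0" "\<And>u v. u \<in> {a..b} \<Longrightarrow> v \<in> {a..b} \<Longrightarrow> norm (\<gamma> u - \<gamma> v) \<le> B * norm (u - v)"
proof -
  have "compact (\<gamma>' ` {a..b})" by (rule compact_continuous_image[OF assms(1) compact_Icc])
  then obtain B0 where B0: "\<And>t. t \<in> {a..b} \<Longrightarrow> norm (\<gamma>' t) \<le> B0"
    using compact_imp_bounded bounded_iff by (metis imageI)
  define B where "B = max B0 0"
  have B: "\<And>t. t \<in> {a..b} \<Longrightarrow> norm (\<gamma>' t) \<le> B" "B \<ge> 0" using B0 by (force simp: B_def)+
  show ?thesis
  proof (rule that[OF B(2)])
    fix u v assume uv: "u \<in> {a..b}" "v \<in> {a..b}"
    show "norm (\<gamma> u - \<gamma> v) \<le> B * norm (u - v)"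
    proof (rule differentiable_bound[of "{a..b}" \<gamma> "\<lambda>t h. h *\<^sub>R \<gamma>' t" B u v])
      show "convex {a..b}" by simp
      show "(\<gamma> has_derivative (\<lambda>h. h *\<^sub>R \<gamma>' x)) (at x within {a..b})" if "x \<in> {a..b}" for x
        using assms(2)[OF that] unfolding has_vector_derivative_def .
      show "onorm (\<lambda>h. h *\<^sub>R \<gamma>' x) \<le> B" if "x \<in> {a..b}" for x
        using B(1)[OF that] by (simp add: onorm_scaleR_left onorm_id)
    qed (use uv in auto)
  qed
qed

lemma tfd_from_C1:
  fixes \<gamma> :: "real \<Rightarrow> 'e::euclidean_space"
  assumes ab: "a < b" and im: "\<gamma> ` {a..b} \<subseteq> M" and c': "continuous_on {a..b} \<gamma>'"
    and der: "\<And>t. t \<in> {a..b} \<Longrightarrow> (\<gamma> has_vector_derivative \<gamma>' t) (at t within {a..b})"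
    and hor: "\<And>t. t \<in> {a<..<b} \<Longrightarrow> \<gamma>' t \<in> D (\<gamma> t) \<and> g (\<gamma> t) (\<gamma>' t) (\<gamma>' t) < 0 \<and> g (\<gamma> t) (T (\<gamma> t)) (\<gamma>' t) < 0"
  shows "tfd_curve M D g T a b \<gamma>"
proof -
  obtain B where B: "B \<ge> 0" "\<And>u v. u \<in> {a..b} \<Longrightarrow> v \<in> {a..b} \<Longrightarrow> norm (\<gamma> u - \<gamma> v) \<le> B * norm (u - v)"
    using lipschitz_from_deriv[OF c' der] by blast
  have ac: "abs_continuous_on a b \<gamma>"
  proof (rule acI)
    fix e :: real assume e: "e > 0"
    show "\<exists>\<delta>>0. \<forall>n (s::nat \<Rightarrow> real) t.
     (\<forall>i<n. a \<le> s i \<and> s i \<le> t i \<and> t i \<le> b) \<longrightarrow>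
     (\<forall>i<n. \<forall>j<n. i \<noteq> j \<longrightarrow> t i \<le> s j \<or> t j \<le> s i) \<longrightarrow>
     (\<Sum>i<n. t i - s i) < \<delta> \<longrightarrow> (\<Sum>i<n. dist (\<gamma> (s i)) (\<gamma> (t i))) < e"
    proof (intro exI[of _ "e / (B + 1)"] conjI allI impI)
      show "e / (B + 1) > 0" using e B(1) by simp
      fix n and s t :: "nat \<Rightarrow> real"
      assume A: "\<forall>i<n. a \<le> s i \<and> s i \<le> t i \<and> t i \<le> b" "(\<Sum>i<n. t i - s i) < e / (B + 1)"
      have "(\<Sum>i<n. dist (\<gamma> (s i)) (\<gamma> (t i))) \<le> (\<Sum>i<n. B * (t i - s i))"
      proof (rule sum_mono)
        fix i assume "i \<in> {..<n}"
        then have "a \<le> s i" "s i \<le> t i" "t i \<le> b" using A(1) by auto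
        then show "dist (\<gamma> (s i)) (\<gamma> (t i)) \<le> B * (t i - s i)"
          using B(2)[of "t i" "s i"] by (simp add: dist_norm norm_minus_commute)
      qed
      also have "\<dots> = B * (\<Sum>i<n. t i - s i)" by (simp add: sum_distrib_left)
      also have "\<dots> \<le> B * (e / (B + 1))" using A(2) B(1) by (intro mult_left_mono) auto
      also have "\<dots> < e" using B(1) e by (simp add: field_simps)
      finally show "(\<Sum>i<n. dist (\<gamma> (s i)) (\<gamma> (t i))) < e" .
    qed
  qed
  have int: "set_integrable lborel {a..b} (\<lambda>t. (norm (\<gamma>' t))\<^sup>2)"
    by (rule borel_integrable_atLeastAtMost') (intro continuous_intros c')
  have ae: "AE t in lborel. t \<in> {a..b} \<longrightarrow> Qc D g T \<gamma> \<gamma>' t"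
    using AE_lborel_singleton[of a] AE_lborel_singleton[of b]
  proof eventually_elim
    case (elim t)
    show ?case
    proof
      assume "t \<in> {a..b}"
      then have t: "a < t" "t < b" using elim by auto
      have "(\<gamma> has_vector_derivative \<gamma>' t) (at t)"
        using der[of t] t by (simp add: at_within_Icc_at)
      then show "Qc D g T \<gamma> \<gamma>' t" using hor[of t] t unfolding Qc_def by auto
    qed
  qed
  show ?thesis unfolding tfd_curve_alt
    by (intro conjI exI[of _ \<gamma>'] im ac int ae)
qed



lemma ode_exists:
  fixes F :: "'a::euclidean_space \<Rightarrow> 'a" and y0 :: 'a
  assumes r: "r > 0" and L: "L \<ge> 0"
    and lip: "\<And>x y. x \<in> cball y0 r \<Longrightarrow> y \<in> cball y0 r \<Longrightarrow> norm (F x - F y) \<le> L * norm (x - y)"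
    and B: "B > 0" and bnd: "\<And>x. x \<in> cball y0 r \<Longrightarrow> norm (F x) \<le> B"
  obtains \<delta> y where "\<delta> > 0" "y 0 = y0" "continuous_on {0..\<delta>} y"
    "\<And>t. t \<in> {0..\<delta>} \<Longrightarrow> y t \<in> cball y0 r"
    "\<And>t. t \<in> {0..\<delta>} \<Longrightarrow> (y has_vector_derivative F (y t)) (at t within {0..\<delta>})"
proof -
  define C where "C = cball y0 r"
  have C: "closed C" "convex C" "C \<noteq> {}" using r by (auto simp: C_def)
  define G where "G x = F (closest_point C x)" for x
  have cpC: "closest_point C x \<in> C" for x using closest_point_in_set[OF C(1) C(3)] .
  have Glip: "norm (G x - G y) \<le> L * norm (x - y)" for x y
  proof -
    have "norm (G x - G y) \<le> L * norm (closest_point C x - closest_point C y)"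
      unfolding G_def by (rule lip) (use cpC in \<open>auto simp: C_def\<close>)
    also have "\<dots> \<le> L * norm (x - y)"
      using closest_point_lipschitz[OF C(2,1,3), of x y] L by (intro mult_left_mono) (auto simp: dist_norm)
    finally show ?thesis .
  qed
  have Gb: "norm (G x) \<le> B" for x unfolding G_def using bnd cpC by (auto simp: C_def)
  have Gc: "continuous_on UNIV G"
    by (rule lipschitz_on_continuous_on[of L]) (rule lipschitz_onI, use Glip L in \<open>auto simp: dist_norm\<close>)
  define \<delta> where "\<delta> = min (r / B) (1 / (2 * (L + 1)))"
  have \<delta>: "\<delta> > 0" "\<delta> * B \<le> r" "L * \<delta> \<le> 1/2"
  proof -
    show "\<delta> > 0" using r B L by (simp add: \<delta>_def)
    have "\<delta> \<le> r / B" by (simp add: \<delta>_def)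
    then show "\<delta> * B \<le> r" using B by (simp add: field_simps)
    have "\<delta> \<le> 1 / (2 * (L + 1))" by (simp add: \<delta>_def)
    then have "L * \<delta> \<le> L * (1 / (2 * (L + 1)))" using L by (intro mult_left_mono) auto
    also have "\<dots> \<le> 1/2" using L by (simp add: field_simps)
    finally show "L * \<delta> \<le> 1/2" .
  qed
  define cl where "cl t = max 0 (min \<delta> t)" for t
  have cl: "cl t \<in> {0..\<delta>}" for t using \<delta> by (auto simp: cl_def)
  have clc: "continuous_on UNIV cl" unfolding cl_def by (intro continuous_intros)
  have cl_id: "t \<in> {0..\<delta>} \<Longrightarrow> cl t = t" for t by (auto simp: cl_def)
  define I where "I u t = y0 + integral {0..cl t} (\<lambda>s. G (u s))" for u :: "real \<Rightarrow> 'a" and t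
  have Ib: "I u \<in> bcontfun" if u: "continuous_on UNIV u" for u
  proof (rule bcontfun_normI)
    have cGu: "continuous_on {0..\<delta>} (\<lambda>s. G (u s))"
      by (rule continuous_on_compose2[OF Gc continuous_on_subset[OF u]]) auto
    have "continuous_on {0..\<delta>} (\<lambda>x. integral {0..x} (\<lambda>s. G (u s)))"
      by (rule indefinite_integral_continuous_1) (rule integrable_continuous_real[OF cGu])
    then have "continuous_on UNIV (\<lambda>t. integral {0..cl t} (\<lambda>s. G (u s)))"
      by (rule continuous_on_compose2[OF _ clc]) (use cl in auto)
    then show "continuous_on UNIV (I u)" unfolding I_def by (intro continuous_intros)
    fix t
    have "norm (integral {0..cl t} (\<lambda>s. G (u s))) \<le> B * (cl t - 0)"
      by (rule integral_bound) (use cl[of t] Gb in \<open>auto intro: continuous_on_subset[OF cGu]\<close>)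
    also have "\<dots> \<le> B * \<delta>" using cl[of t] B by (intro mult_left_mono) auto
    finally show "norm (I u t) \<le> norm y0 + B * \<delta>" unfolding I_def
      by (meson add_left_mono norm_triangle_ineq order_trans)
  qed
  define \<Phi> :: "(real \<Rightarrow>\<^sub>C 'a) \<Rightarrow> (real \<Rightarrow>\<^sub>C 'a)" where "\<Phi> f = Bcontfun (I (apply_bcontfun f))" for f
  have \<Phi>_apply: "apply_bcontfun (\<Phi> f) = I (apply_bcontfun f)" for f
    unfolding \<Phi>_def by (rule Bcontfun_inverse[OF Ib]) simp
  have contr: "dist (\<Phi> f) (\<Phi> g) \<le> (1/2) * dist f g" for f g
  proof (rule dist_bound)
    fix t
    have cf: "continuous_on {0..cl t} (\<lambda>s. G (apply_bcontfun f s) - G (apply_bcontfun g s))"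
      by (intro continuous_intros continuous_on_compose2[OF Gc]) auto
    have if1: "(\<lambda>s. G (apply_bcontfun f s)) integrable_on {0..cl t}"
      by (intro integrable_continuous_real continuous_on_compose2[OF Gc]) auto
    have if2: "(\<lambda>s. G (apply_bcontfun g s)) integrable_on {0..cl t}"
      by (intro integrable_continuous_real continuous_on_compose2[OF Gc]) auto
    have "dist (\<Phi> f t) (\<Phi> g t) = norm (integral {0..cl t} (\<lambda>s. G (apply_bcontfun f s) - G (apply_bcontfun g s)))"
      unfolding \<Phi>_apply I_def dist_norm by (simp add: integral_diff[OF if1 if2])
    also have "\<dots> \<le> (L * dist f g) * (cl t - 0)"
    proof (rule integral_bound)
      show "0 \<le> cl t" using cl[of t] by auto
      show "continuous_on {0..cl t} (\<lambda>s. G (apply_bcontfun f s) - G (apply_bcontfun g s))" by (rule cf)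
      fix s
      have "norm (G (apply_bcontfun f s) - G (apply_bcontfun g s)) \<le> L * norm (apply_bcontfun f s - apply_bcontfun g s)"
        by (rule Glip)
      also have "\<dots> \<le> L * dist f g" using dist_bounded[of f s g] L by (intro mult_left_mono) (auto simp: dist_norm)
      finally show "norm (G (apply_bcontfun f s) - G (apply_bcontfun g s)) \<le> L * dist f g" .
    qed
    also have "\<dots> \<le> (L * dist f g) * \<delta>" using cl[of t] L by (intro mult_left_mono) auto
    also have "\<dots> = (L * \<delta>) * dist f g" by simp
    also have "\<dots> \<le> (1/2) * dist f g" using \<delta>(3) by (intro mult_right_mono) auto
    finally show "dist (\<Phi> f t) (\<Phi> g t) \<le> (1/2) * dist f g" .
  qed
  obtain f where ff: "\<Phi> f = f" using banach_fix_type[of "1/2" \<Phi>] contr by auto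
  define y where "y = apply_bcontfun f"
  have yI: "y t = I y t" for t using ff unfolding y_def by (metis \<Phi>_apply)
  have cy: "continuous_on UNIV y" unfolding y_def by simp
  have cGy: "continuous_on {0..\<delta>} (\<lambda>s. G (y s))"
    by (rule continuous_on_compose2[OF Gc continuous_on_subset[OF cy]]) auto
  have yeq: "y t = y0 + integral {0..t} (\<lambda>s. G (y s))" if "t \<in> {0..\<delta>}" for t
    using yI[of t] cl_id[OF that] unfolding I_def by simp
  have inC: "y t \<in> C" if t: "t \<in> {0..\<delta>}" for t
  proof -
    have "norm (integral {0..t} (\<lambda>s. G (y s))) \<le> B * (t - 0)"
      by (rule integral_bound) (use t Gb in \<open>auto intro: continuous_on_subset[OF cGy]\<close>)
    also have "\<dots> \<le> B * \<delta>" using t B by (intro mult_left_mono) auto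
    also have "\<dots> \<le> r" using \<delta>(2) by (simp add: mult.commute)
    finally show ?thesis unfolding C_def using yeq[OF t] by (simp add: dist_norm)
  qed
  have GF: "G (y t) = F (y t)" if "t \<in> {0..\<delta>}" for t
    unfolding G_def using closest_point_self[OF inC[OF that]] by simp
  show ?thesis
  proof (rule that[OF \<delta>(1)])
    show "y 0 = y0" using yeq[of 0] \<delta>(1) by simp
    show "continuous_on {0..\<delta>} y" using cy by (rule continuous_on_subset) simp
    show "y t \<in> cball y0 r" if "t \<in> {0..\<delta>}" for t using inC[OF that] by (simp add: C_def)
    show "(y has_vector_derivative F (y t)) (at t within {0..\<delta>})" if t: "t \<in> {0..\<delta>}" for t
    proof -
      have "((\<lambda>u. integral {0..u} (\<lambda>s. G (y s))) has_vector_derivative G (y t)) (at t within {0..\<delta>})"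
        by (rule integral_has_vector_derivative[OF cGy t])
      then have "((\<lambda>u. y0 + integral {0..u} (\<lambda>s. G (y s))) has_vector_derivative G (y t)) (at t within {0..\<delta>})"
        by (auto intro!: derivative_eq_intros)
      from has_vector_derivative_transform[OF t yeq this]
      have "(y has_vector_derivative G (y t)) (at t within {0..\<delta>})" .
      then show ?thesis using GF[OF t] by simp
    qed
  qed
qed



lemma tangent_in_range:
  fixes \<phi> :: "'d::euclidean_space \<Rightarrow> 'e::euclidean_space" and P :: "'e \<Rightarrow> 'd"
  assumes hom: "homeomorphism V (M \<inter> U) \<phi> \<psi>" and oU: "open U"
    and U1: "U1 \<subseteq> V" "open U1" "x \<in> U1"
    and \<phi>der: "(\<phi> has_derivative \<phi>') (at x)"
    and Plin: "linear P"
    and ginv: "\<And>z. z \<in> U1 \<Longrightarrow> g (P (\<phi> z)) = z"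
    and gder: "(g has_derivative g') (at (P (\<phi> x)))"
    and w: "w \<in> tangent_space M (\<phi> x)"
  shows "\<phi>' (g' (P w)) = w"
proof -
  obtain c where c: "c 0 = \<phi> x" "\<And>t. t \<in> {-1<..<1} \<Longrightarrow> c t \<in> M" "(c has_vector_derivative w) (at 0)"
    using w unfolding tangent_space_def by blast
  have xV: "x \<in> V" using U1 by blast
  have qMU: "\<phi> x \<in> M \<inter> U" using homeomorphism_image1[OF hom] xV by blast
  have \<psi>q: "\<psi> (\<phi> x) = x" using homeomorphism_apply1[OF hom xV] .
  have c\<psi>: "continuous_on (M \<inter> U) \<psi>" using hom unfolding homeomorphism_def by blast
  have "openin (top_of_set (M \<inter> U)) ((M \<inter> U) \<inter> \<psi> -` U1)"
    using c\<psi> U1(2) unfolding continuous_openin_preimage_eq by blast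
  then obtain G where G: "open G" "(M \<inter> U) \<inter> \<psi> -` U1 = (M \<inter> U) \<inter> G"
    by (auto simp: openin_open)
  have qG: "\<phi> x \<in> G" using G(2) qMU \<psi>q U1(3) by blast
  have "continuous (at 0) c" using has_vector_derivative_continuous[OF c(3)] .
  then have "eventually (\<lambda>t. c t \<in> U \<inter> G) (at 0)"
    using oU G(1) qG qMU c(1) unfolding continuous_def
    by (intro topological_tendstoD) (auto simp: Lim_at_imp_Lim_at_within)
  then obtain d where d: "d > 0" "\<And>t. t \<noteq> 0 \<Longrightarrow> dist t 0 < d \<Longrightarrow> c t \<in> U \<inter> G"
    unfolding eventually_at by blast
  define \<epsilon> where "\<epsilon> = min d 1"
  have \<epsilon>: "\<epsilon> > 0" using d by (simp add: \<epsilon>_def)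
  define H where "H z = \<phi> (g (P z))" for z
  have Hc: "H (c t) = c t" if t: "t \<in> ball 0 \<epsilon>" for t
  proof -
    have "\<bar>t\<bar> < 1" using t by (auto simp: \<epsilon>_def dist_norm)
    then have cM: "c t \<in> M" using c(2)[of t] by (simp add: abs_less_iff)
    have "c t \<in> U \<inter> G"
    proof (cases "t = 0")
      case True then show ?thesis using qMU qG c(1) by simp
    next
      case False then show ?thesis using d(2)[of t] t by (auto simp: \<epsilon>_def dist_norm)
    qed
    then have ct: "c t \<in> (M \<inter> U) \<inter> \<psi> -` U1" using cM G(2) by blast
    then have "\<phi> (\<psi> (c t)) = c t" using homeomorphism_apply2[OF hom] by blast
    moreover have "g (P (\<phi> (\<psi> (c t)))) = \<psi> (c t)" using ginv ct by blast
    ultimately show ?thesis unfolding H_def by simp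
  qed
  have gx: "g (P (\<phi> x)) = x" using ginv U1(3) .
  have Pder: "(P has_derivative P) (at (c 0))"
    using Plin by (simp add: linear_conv_bounded_linear bounded_linear_imp_has_derivative)
  have Hder: "(H has_derivative (\<lambda>v. \<phi>' (g' (P v)))) (at (c 0))"
  proof -
    have "((\<lambda>z. g (P z)) has_derivative (\<lambda>v. g' (P v))) (at (c 0))"
      using has_derivative_compose[OF Pder] gder c(1) by simp
    moreover have "(\<phi> has_derivative \<phi>') (at (g (P (c 0))))" using \<phi>der gx c(1) by simp
    ultimately show ?thesis unfolding H_def using has_derivative_compose by blast
  qed
  have linH: "linear (\<lambda>v. \<phi>' (g' (P v)))" using has_derivative_linear[OF Hder] .
  have cder: "(c has_derivative (\<lambda>h. h *\<^sub>R w)) (at 0)" using c(3) unfolding has_vector_derivative_def .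
  have "((\<lambda>t. H (c t)) has_derivative (\<lambda>h. \<phi>' (g' (P (h *\<^sub>R w))))) (at 0)"
    using has_derivative_compose[OF cder Hder] by simp
  moreover have "(\<lambda>h. \<phi>' (g' (P (h *\<^sub>R w)))) = (\<lambda>h. h *\<^sub>R \<phi>' (g' (P w)))"
    using linear_scale[OF linH] by (simp add: fun_eq_iff)
  ultimately have "((\<lambda>t. H (c t)) has_vector_derivative \<phi>' (g' (P w))) (at 0)"
    unfolding has_vector_derivative_def by simp
  moreover have "(0::real) \<in> ball 0 \<epsilon>" using \<epsilon> by simp
  ultimately have "(c has_vector_derivative \<phi>' (g' (P w))) (at 0)"
    using has_vector_derivative_transform_within_open[of "\<lambda>t. H (c t)" _ 0 "ball 0 \<epsilon>" c] Hc by blast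
  from vector_derivative_unique_at[OF c(3) this] show ?thesis by (rule sym)
qed



lemma smooth_C1:
  assumes "smooth_on U f"
  shows "\<exists>f'. (\<forall>x\<in>U. (f has_derivative f' x) (at x)) \<and> (\<forall>v. continuous_on U (\<lambda>x. f' x v))"
proof -
  have "Ck_on (Suc 0) U f" using assms unfolding smooth_on_def by blast
  then show ?thesis by simp
qed

lemma cont_nbhd:
  assumes "open W" "continuous_on W k" "y0 \<in> W" "open Op" "k y0 \<in> Op"
  obtains r where "r > 0" "cball y0 r \<subseteq> W" "\<And>y. y \<in> cball y0 r \<Longrightarrow> k y \<in> Op"
proof -
  have "open (W \<inter> k -` Op)" by (rule continuous_open_preimage[OF assms(2,1,4)])
  moreover have "y0 \<in> W \<inter> k -` Op" using assms by auto
  ultimately obtain r where "r > 0" "cball y0 r \<subseteq> W \<inter> k -` Op" using open_contains_cball by blast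
  then show ?thesis using that by blast
qed

lemma onorm_inv_bound:
  fixes A :: "'a::euclidean_space \<Rightarrow>\<^sub>L 'a"
  assumes bij: "bij (blinfun_apply A)" and n: "norm (A - id_blinfun) < 1/2"
  shows "onorm (inv (blinfun_apply A)) \<le> 2"
proof (rule onorm_le)
  fix v
  define u where "u = inv (blinfun_apply A) v"
  have Au: "blinfun_apply A u = v" unfolding u_def using bij by (simp add: bij_is_surj surj_f_inv_f)
  have "norm (u - blinfun_apply A u) = norm (blinfun_apply (A - id_blinfun) u)"
    by (simp add: blinfun.diff_left norm_minus_commute)
  also have "\<dots> \<le> norm (A - id_blinfun) * norm u" by (rule norm_blinfun)
  also have "\<dots> \<le> (1/2) * norm u" using n by (intro mult_right_mono) auto
  finally have "norm (u - v) \<le> (1/2) * norm u" using Au by simp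
  moreover have "norm u \<le> norm v + norm (u - v)" by (metis norm_triangle_sub add.commute)
  ultimately have "norm u \<le> 2 * norm v" by linarith
  then show "norm (inv (blinfun_apply A) v) \<le> 2 * norm v" unfolding u_def .
qed


lemma compact_bound:
  fixes f :: "'a::metric_space \<Rightarrow> real"
  assumes "continuous_on S f" "compact S"
  shows "\<exists>K\<ge>0. \<forall>y\<in>S. f y \<le> K"
proof -
  have "bounded (f ` S)" by (rule compact_imp_bounded[OF compact_continuous_image[OF assms]])
  then obtain a where a: "\<And>x. x \<in> f ` S \<Longrightarrow> norm x \<le> a" unfolding bounded_iff by blast
  show ?thesis
  proof (intro exI[of _ "max a 0"] conjI ballI)
    fix y assume "y \<in> S"
    then have "norm (f y) \<le> a" using a by blast
    then show "f y \<le> max a 0" by simp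
  qed simp
qed

lemma local_curve:
  fixes M :: "'e::euclidean_space set" and s :: real
  assumes sst: "sub_space_time TYPE('d::euclidean_space) M D k g T" and pM: "p \<in> M" and s: "\<bar>s\<bar> = 1"
  obtains \<delta> \<gamma> where "\<delta> > 0" "\<gamma> 0 = p" "\<gamma> ` {0..\<delta>} \<subseteq> M" "continuous_on {0..\<delta>} (\<lambda>t. T (\<gamma> t))"
   "\<And>t. t \<in> {0..\<delta>} \<Longrightarrow> (\<gamma> has_vector_derivative (s *\<^sub>R T (\<gamma> t))) (at t within {0..\<delta>})"
proof -
  have sub: "submanifold TYPE('d) M" using sst unfolding sub_space_time_def by (elim conjE)
  have sf: "smooth_fun_on M T" using sst unfolding sub_space_time_def by (elim conjE)
  have sd: "smooth_distribution M D k" using sst unfolding sub_space_time_def by (elim conjE)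
  have TD0: "\<forall>q\<in>M. T q \<in> D q \<and> g q (T q) (T q) < 0" using sst unfolding sub_space_time_def by (elim conjE)
  have TD: "T q \<in> D q" if "q \<in> M" for q using TD0 that by blast
  obtain V :: "'d set" and U \<phi> \<psi> where chart: "open V" "open U" "p \<in> U" "smooth_on V \<phi>"
      "\<forall>x\<in>V. inj (frechet_derivative \<phi> (at x))" "homeomorphism V (M \<inter> U) \<phi> \<psi>"
  proof -
    have "\<exists>(V::'d set) U \<phi> \<psi>. open V \<and> open U \<and> p \<in> U \<and>
      smooth_on V \<phi> \<and> (\<forall>x\<in>V. inj (frechet_derivative \<phi> (at x))) \<and>
      homeomorphism V (M \<inter> U) \<phi> \<psi>"
      using sub pM unfolding submanifold_def by (rule bspec)
    then show ?thesis
      apply (elim exE conjE)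
      apply (rule that)
           apply assumption+
      done
  qed
  obtain Uh h where hh: "open Uh" "p \<in> Uh" "smooth_on Uh h" "\<And>q. q \<in> M \<inter> Uh \<Longrightarrow> T q = h q"
  proof -
    have "\<exists>U h. open U \<and> p \<in> U \<and> smooth_on U h \<and> (\<forall>q\<in>M \<inter> U. T q = h q)"
      using sf pM unfolding smooth_fun_on_def by (rule bspec)
    then show ?thesis
      apply (elim exE conjE)
      apply (rule that)
         apply assumption+
      apply blast
      done
  qed
  have tang: "T q \<in> tangent_space M q" if "q \<in> M" for q
    using sd TD[OF that] that unfolding smooth_distribution_def by blast
  obtain \<phi>' where \<phi>': "\<And>x. x \<in> V \<Longrightarrow> (\<phi> has_derivative \<phi>' x) (at x)" "\<And>v. continuous_on V (\<lambda>x. \<phi>' x v)"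
    using smooth_C1[OF chart(4)] by blast
  obtain h' where h': "\<And>x. x \<in> Uh \<Longrightarrow> (h has_derivative h' x) (at x)" "\<And>v. continuous_on Uh (\<lambda>x. h' x v)"
    using smooth_C1[OF hh(3)] by blast
  have inj\<phi>': "inj (\<phi>' x)" if "x \<in> V" for x
    using chart(5) that frechet_derivative_at[OF \<phi>'(1)[OF that]] by simp
  have bl\<phi>': "bounded_linear (\<phi>' x)" if "x \<in> V" for x using has_derivative_bounded_linear[OF \<phi>'(1)[OF that]] .
  have blh': "bounded_linear (h' x)" if "x \<in> Uh" for x using has_derivative_bounded_linear[OF h'(1)[OF that]] .
  have c\<phi>: "continuous_on V \<phi>"
    using \<phi>'(1) by (meson continuous_at_imp_continuous_on has_derivative_continuous)
  have ch: "continuous_on Uh h"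
    using h'(1) by (meson continuous_at_imp_continuous_on has_derivative_continuous)
  define x0 where "x0 = \<psi> p"
  have pMU: "p \<in> M \<inter> U" using pM chart(3) by blast
  have x0V: "x0 \<in> V" using homeomorphism_image2[OF chart(6)] pMU unfolding x0_def by blast
  have \<phi>x0: "\<phi> x0 = p" using homeomorphism_apply2[OF chart(6) pMU] unfolding x0_def .
  obtain P where P: "linear P" "P \<circ> \<phi>' x0 = id"
    using linear_injective_left_inverse[OF has_derivative_linear[OF \<phi>'(1)[OF x0V]] inj\<phi>'[OF x0V]] by blast
  have blP: "bounded_linear P" using P(1) by (simp add: linear_conv_bounded_linear)
  have P\<phi>': "P (\<phi>' x0 v) = v" for v using P(2) by (metis comp_apply id_apply)
  define \<theta> where "\<theta> x = P (\<phi> x)" for x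
  define \<theta>' where "\<theta>' x = Blinfun (\<lambda>v. P (\<phi>' x v))" for x
  have \<theta>'_apply: "blinfun_apply (\<theta>' x) = (\<lambda>v. P (\<phi>' x v))" if "x \<in> V" for x
    unfolding \<theta>'_def
    by (rule bounded_linear_Blinfun_apply) (rule bounded_linear_compose[OF blP bl\<phi>'[OF that]])
  have \<theta>der: "(\<theta> has_derivative blinfun_apply (\<theta>' x)) (at x)" if "x \<in> V" for x
    unfolding \<theta>_def \<theta>'_apply[OF that] by (rule bounded_linear.has_derivative[OF blP \<phi>'(1)[OF that]])
  have \<theta>cont: "continuous_on V \<theta>'"
  proof (rule continuous_on_blinfun_componentwise)
    fix i :: 'd
    have "continuous_on V (\<lambda>x. P (\<phi>' x i))"
      by (rule bounded_linear.continuous_on[OF blP \<phi>'(2)])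
    then show "continuous_on V (\<lambda>x. blinfun_apply (\<theta>' x) i)"
      by (rule continuous_on_eq) (simp add: \<theta>'_apply)
  qed
  have \<theta>'x0: "\<theta>' x0 = id_blinfun"
    by (rule blinfun_eqI) (simp add: \<theta>'_apply[OF x0V] P\<phi>')
  have \<theta>'x0': "id_blinfun o\<^sub>L \<theta>' x0 = id_blinfun"
    by (rule blinfun_eqI) (simp add: \<theta>'x0)
  obtain U1 W ginv ginv' where ift: "open U1" "U1 \<subseteq> V" "x0 \<in> U1" "open W" "\<theta> x0 \<in> W"
      "homeomorphism U1 W \<theta> ginv"
      "\<And>y. y \<in> W \<Longrightarrow> (ginv has_derivative (ginv' y)) (at y)"
      "\<And>y. y \<in> W \<Longrightarrow> ginv' y = inv (blinfun_apply (\<theta>'(ginv y)))"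
      "\<And>y. y \<in> W \<Longrightarrow> bij (blinfun_apply (\<theta>'(ginv y)))"
    using inverse_function_theorem[OF chart(1) \<theta>der \<theta>cont x0V \<theta>'x0'] by blast
  define y0 where "y0 = \<theta> x0"
  have gi1: "ginv (\<theta> z) = z" if "z \<in> U1" for z using homeomorphism_apply1[OF ift(6) that] .
  have gi2: "\<theta> (ginv y) = y" if "y \<in> W" for y using homeomorphism_apply2[OF ift(6) that] .
  have giU1: "ginv y \<in> U1" if "y \<in> W" for y using homeomorphism_image2[OF ift(6)] that by blast
  have giV: "ginv y \<in> V" if "y \<in> W" for y using giU1[OF that] ift(2) by blast
  have cgi: "continuous_on W ginv" using homeomorphism_cont2[OF ift(6)] .
  have gy0: "ginv y0 = x0" unfolding y0_def using gi1[OF ift(3)] .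
  have y0W: "y0 \<in> W" unfolding y0_def using ift(5) .
  have ck\<phi>: "continuous_on W (\<lambda>y. \<phi> (ginv y))"
    by (rule continuous_on_compose2[OF c\<phi> cgi]) (use giV in blast)
  have ck\<theta>: "continuous_on W (\<lambda>y. \<theta>' (ginv y))"
    by (rule continuous_on_compose2[OF \<theta>cont cgi]) (use giV in blast)
  obtain r1 where r1: "r1 > 0" "cball y0 r1 \<subseteq> W" "\<And>y. y \<in> cball y0 r1 \<Longrightarrow> \<phi> (ginv y) \<in> Uh"
    using cont_nbhd[OF ift(4) ck\<phi> y0W hh(1)] gy0 \<phi>x0 hh(2) by metis
  obtain r2 where r2: "r2 > 0" "cball y0 r2 \<subseteq> W" "\<And>y. y \<in> cball y0 r2 \<Longrightarrow> \<theta>' (ginv y) \<in> ball id_blinfun (1/2)"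
    using cont_nbhd[OF ift(4) ck\<theta> y0W open_ball[of id_blinfun "1/2"]] gy0 \<theta>'x0 by (metis centre_in_ball half_gt_zero zero_less_one)
  define r where "r = min r1 r2"
  have r: "r > 0" using r1 r2 by (simp add: r_def)
  have rW: "cball y0 r \<subseteq> W" using r1 unfolding r_def by auto
  have rUh: "\<phi> (ginv y) \<in> Uh" if "y \<in> cball y0 r" for y using r1(3)[of y] that by (auto simp: r_def)
  have rN: "norm (\<theta>' (ginv y) - id_blinfun) < 1/2" if "y \<in> cball y0 r" for y
    using r2(3)[of y] that by (auto simp: r_def dist_norm norm_minus_commute)
  define F where "F y = P (h (\<phi> (ginv y)))" for y
  define F' where "F' y = (\<lambda>v. P (h' (\<phi> (ginv y)) (\<phi>' (ginv y) (ginv' y v))))" for y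
  have Fder: "(F has_derivative F' y) (at y)" if y: "y \<in> cball y0 r" for y
  proof -
    have yW: "y \<in> W" using y rW by blast
    have d1: "((\<lambda>y. \<phi> (ginv y)) has_derivative (\<lambda>v. \<phi>' (ginv y) (ginv' y v))) (at y)"
      using has_derivative_compose[OF ift(7)[OF yW] \<phi>'(1)[OF giV[OF yW]]] .
    have d2: "((\<lambda>y. h (\<phi> (ginv y))) has_derivative (\<lambda>v. h' (\<phi> (ginv y)) (\<phi>' (ginv y) (ginv' y v)))) (at y)"
      using has_derivative_compose[OF d1 h'(1)[OF rUh[OF y]]] .
    show ?thesis unfolding F_def F'_def using bounded_linear.has_derivative[OF blP d2] .
  qed
  have cS\<phi>: "continuous_on (cball y0 r) (\<lambda>y. \<Sum>i\<in>Basis. norm (\<phi>' (ginv y) i))"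
  proof (intro continuous_intros)
    fix i :: 'd
    show "continuous_on (cball y0 r) (\<lambda>y. \<phi>' (ginv y) i)"
      by (rule continuous_on_compose2[OF \<phi>'(2) continuous_on_subset[OF cgi rW]]) (use giV rW in blast)
  qed
  have cSh: "continuous_on (cball y0 r) (\<lambda>y. \<Sum>i\<in>Basis. norm (h' (\<phi> (ginv y)) i))"
  proof (intro continuous_intros)
    fix i :: 'e
    show "continuous_on (cball y0 r) (\<lambda>y. h' (\<phi> (ginv y)) i)"
      by (rule continuous_on_compose2[OF h'(2) continuous_on_subset[OF ck\<phi> rW]]) (use rUh in blast)
  qed
  obtain K\<phi> where K\<phi>: "K\<phi> \<ge> 0" "\<And>y. y \<in> cball y0 r \<Longrightarrow> (\<Sum>i\<in>Basis. norm (\<phi>' (ginv y) i)) \<le> K\<phi>"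
    using compact_bound[OF cS\<phi> compact_cball] by blast
  obtain Kh where Kh: "Kh \<ge> 0" "\<And>y. y \<in> cball y0 r \<Longrightarrow> (\<Sum>i\<in>Basis. norm (h' (\<phi> (ginv y)) i)) \<le> Kh"
    using compact_bound[OF cSh compact_cball] by blast
  define L where "L = onorm P * (Kh * (K\<phi> * 2))"
  have L0: "L \<ge> 0" unfolding L_def using K\<phi>(1) Kh(1) onorm_pos_le[OF blP] by simp
  have onF': "onorm (F' y) \<le> L" if y: "y \<in> cball y0 r" for y
  proof -
    have yW: "y \<in> W" using y rW by blast
    have blg: "bounded_linear (ginv' y)" using has_derivative_bounded_linear[OF ift(7)[OF yW]] .
    have blp: "bounded_linear (\<phi>' (ginv y))" using bl\<phi>'[OF giV[OF yW]] .
    have blh: "bounded_linear (h' (\<phi> (ginv y)))" using blh'[OF rUh[OF y]] .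
    have og: "onorm (ginv' y) \<le> 2"
      unfolding ift(8)[OF yW] by (rule onorm_inv_bound[OF ift(9)[OF yW] rN[OF y]])
    have op: "onorm (\<phi>' (ginv y)) \<le> K\<phi>"
      using onorm_componentwise[OF blp] K\<phi>(2)[OF y] by linarith
    have oh: "onorm (h' (\<phi> (ginv y))) \<le> Kh"
      using onorm_componentwise[OF blh] Kh(2)[OF y] by linarith
    have b2: "bounded_linear (\<phi>' (ginv y) \<circ> ginv' y)"
      unfolding o_def by (rule bounded_linear_compose[OF blp blg])
    have b1: "bounded_linear (h' (\<phi> (ginv y)) \<circ> (\<phi>' (ginv y) \<circ> ginv' y))"
      unfolding o_def by (rule bounded_linear_compose[OF blh bounded_linear_compose[OF blp blg]])
    have c2: "onorm (\<phi>' (ginv y) \<circ> ginv' y) \<le> K\<phi> * 2"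
      using onorm_compose[OF blp blg] op og onorm_pos_le[OF blp] onorm_pos_le[OF blg]
      by (meson mult_mono order_trans K\<phi>(1))
    have c1: "onorm (h' (\<phi> (ginv y)) \<circ> (\<phi>' (ginv y) \<circ> ginv' y)) \<le> Kh * (K\<phi> * 2)"
      using onorm_compose[OF blh b2] oh c2 onorm_pos_le[OF blh] onorm_pos_le[OF b2]
      by (meson mult_mono order_trans Kh(1))
    have "F' y = P \<circ> (h' (\<phi> (ginv y)) \<circ> (\<phi>' (ginv y) \<circ> ginv' y))" unfolding F'_def o_def ..
    then have "onorm (F' y) \<le> onorm P * onorm (h' (\<phi> (ginv y)) \<circ> (\<phi>' (ginv y) \<circ> ginv' y))"
      using onorm_compose[OF blP b1] by simp
    also have "\<dots> \<le> onorm P * (Kh * (K\<phi> * 2))"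
      by (rule mult_left_mono[OF c1 onorm_pos_le[OF blP]])
    finally show ?thesis unfolding L_def .
  qed
  have Flip: "norm (F x - F y) \<le> L * norm (x - y)" if "x \<in> cball y0 r" "y \<in> cball y0 r" for x y
    by (rule differentiable_bound[OF convex_cball _ onF' that])
       (rule has_derivative_at_withinI[OF Fder], assumption)
  define B where "B = norm (F y0) + L * r + 1"
  have B: "B > 0" unfolding B_def using L0 r by (simp add: add_nonneg_pos)
  have Fb: "norm (F y) \<le> B" if "y \<in> cball y0 r" for y
  proof -
    have "norm (F y) \<le> norm (F y0) + norm (F y - F y0)" by (metis norm_triangle_sub add.commute)
    also have "norm (F y - F y0) \<le> L * norm (y - y0)" using Flip[OF that] r by simp
    also have "\<dots> \<le> L * r" using that L0 by (intro mult_left_mono) (auto simp: dist_norm norm_minus_commute)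
    finally show ?thesis unfolding B_def by simp
  qed
  define Fs where "Fs y = s *\<^sub>R F y" for y
  have Fslip: "norm (Fs x - Fs y) \<le> L * norm (x - y)" if "x \<in> cball y0 r" "y \<in> cball y0 r" for x y
    using Flip[OF that] s by (simp add: Fs_def flip: scaleR_diff_right)
  have Fsb: "norm (Fs y) \<le> B" if "y \<in> cball y0 r" for y using Fb[OF that] s by (simp add: Fs_def)
  obtain \<delta> yc where ode: "\<delta> > 0" "yc 0 = y0" "continuous_on {0..\<delta>} yc"
      "\<And>t. t \<in> {0..\<delta>} \<Longrightarrow> yc t \<in> cball y0 r"
      "\<And>t. t \<in> {0..\<delta>} \<Longrightarrow> (yc has_vector_derivative Fs (yc t)) (at t within {0..\<delta>})"
    using ode_exists[OF r L0 Fslip B Fsb] by blast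
  define \<gamma> where "\<gamma> t = \<phi> (ginv (yc t))" for t
  show ?thesis
  proof (rule that[OF ode(1)])
    show "\<gamma> 0 = p" unfolding \<gamma>_def ode(2) gy0 \<phi>x0 ..
    have \<gamma>M: "\<gamma> t \<in> M \<inter> Uh" if "t \<in> {0..\<delta>}" for t
    proof -
      have "yc t \<in> W" using ode(4)[OF that] rW by blast
      then have "\<phi> (ginv (yc t)) \<in> M \<inter> U" using homeomorphism_image1[OF chart(6)] giV by blast
      then show ?thesis using rUh[OF ode(4)[OF that]] unfolding \<gamma>_def by blast
    qed
    then show "\<gamma> ` {0..\<delta>} \<subseteq> M" by blast
    have c\<gamma>: "continuous_on {0..\<delta>} \<gamma>"
      unfolding \<gamma>_def
      by (rule continuous_on_compose2[OF continuous_on_subset[OF ck\<phi> rW] ode(3)]) (use ode(4) in blast)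
    have "continuous_on {0..\<delta>} (\<lambda>t. h (\<gamma> t))"
      by (rule continuous_on_compose2[OF ch c\<gamma>]) (use \<gamma>M in blast)
    then show "continuous_on {0..\<delta>} (\<lambda>t. T (\<gamma> t))"
      by (rule continuous_on_eq) (use \<gamma>M hh(4) in auto)
    fix t assume t: "t \<in> {0..\<delta>}"
    define y where "y = yc t"
    have yB: "y \<in> cball y0 r" using ode(4)[OF t] unfolding y_def .
    have yW: "y \<in> W" using yB rW by blast
    define x where "x = ginv y"
    have xU1: "x \<in> U1" unfolding x_def using giU1[OF yW] .
    have xV: "x \<in> V" using xU1 ift(2) by blast
    define K where "K v = \<phi>' x (ginv' y v)" for v
    have Kder: "((\<lambda>y. \<phi> (ginv y)) has_derivative K) (at y)"
      unfolding K_def x_def using has_derivative_compose[OF ift(7)[OF yW] \<phi>'(1)[OF giV[OF yW]]] .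
    have linK: "linear K" using has_derivative_linear[OF Kder] .
    have ycder: "(yc has_derivative (\<lambda>h. h *\<^sub>R Fs y)) (at t within {0..\<delta>})"
      using ode(5)[OF t] unfolding has_vector_derivative_def y_def .
    have "(\<gamma> has_derivative (\<lambda>h. K (h *\<^sub>R Fs y))) (at t within {0..\<delta>})"
      unfolding \<gamma>_def using has_derivative_compose[OF ycder, of "\<lambda>y. \<phi> (ginv y)" K] Kder unfolding y_def by simp
    moreover have "(\<lambda>h. K (h *\<^sub>R Fs y)) = (\<lambda>h. h *\<^sub>R K (Fs y))"
      using linear_scale[OF linK] by (simp add: fun_eq_iff)
    ultimately have d\<gamma>: "(\<gamma> has_vector_derivative K (Fs y)) (at t within {0..\<delta>})"
      unfolding has_vector_derivative_def by simp
    have \<gamma>t: "\<gamma> t = \<phi> x" unfolding \<gamma>_def x_def y_def ..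
    have Px: "P (\<phi> x) = y" using gi2[OF yW] unfolding x_def \<theta>_def .
    have ginvP: "ginv (P (\<phi> z)) = z" if "z \<in> U1" for z using gi1[OF that] unfolding \<theta>_def .
    have gder: "(ginv has_derivative ginv' y) (at (P (\<phi> x)))" using ift(7)[OF yW] Px by simp
    have "T (\<phi> x) \<in> tangent_space M (\<phi> x)" using tang \<gamma>M[OF t] \<gamma>t by auto
    from tangent_in_range[OF chart(6) chart(2) ift(2) ift(1) xU1 \<phi>'(1)[OF xV] P(1) ginvP gder this]
    have key: "\<phi>' x (ginv' y (P (T (\<phi> x)))) = T (\<phi> x)" .
    have Th: "T (\<phi> x) = h (\<phi> x)" using hh(4) \<gamma>M[OF t] \<gamma>t by auto
    have "K (Fs y) = s *\<^sub>R K (F y)" unfolding Fs_def using linear_scale[OF linK] by simp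
    also have "K (F y) = T (\<gamma> t)" unfolding K_def F_def x_def[symmetric] using key Th \<gamma>t by simp
    finally have "K (Fs y) = s *\<^sub>R T (\<gamma> t)" .
    then show "(\<gamma> has_vector_derivative s *\<^sub>R T (\<gamma> t)) (at t within {0..\<delta>})" using d\<gamma> by simp
  qed
qed



lemma through:
  fixes M :: "'e::euclidean_space set"
  assumes sst: "sub_space_time TYPE('d::euclidean_space) M D k g T" and xM: "x \<in> M"
  shows "\<exists>a b. chron M D g T a x \<and> chron M D g T x b"
proof -
  have TD0: "\<forall>q\<in>M. T q \<in> D q \<and> g q (T q) (T q) < 0" using sst unfolding sub_space_time_def by (elim conjE)
  obtain \<delta> \<gamma> where f: "\<delta> > 0" "\<gamma> 0 = x" "\<gamma> ` {0..\<delta>} \<subseteq> M" "continuous_on {0..\<delta>} (\<lambda>t. T (\<gamma> t))"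
     "\<And>t. t \<in> {0..\<delta>} \<Longrightarrow> (\<gamma> has_vector_derivative ((1::real) *\<^sub>R T (\<gamma> t))) (at t within {0..\<delta>})"
    using local_curve[OF sst xM, of 1] by auto
  have "tfd_curve M D g T 0 \<delta> \<gamma>"
  proof (rule tfd_from_C1[OF f(1) f(3) f(4)])
    show "(\<gamma> has_vector_derivative T (\<gamma> t)) (at t within {0..\<delta>})" if "t \<in> {0..\<delta>}" for t
      using f(5)[OF that] by simp
    show "T (\<gamma> t) \<in> D (\<gamma> t) \<and> g (\<gamma> t) (T (\<gamma> t)) (T (\<gamma> t)) < 0 \<and> g (\<gamma> t) (T (\<gamma> t)) (T (\<gamma> t)) < 0"
      if "t \<in> {0<..<\<delta>}" for t
    proof -
      have "\<gamma> t \<in> M" using f(3) that by auto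
      then show ?thesis using TD0 by auto
    qed
  qed
  then have fw: "chron M D g T x (\<gamma> \<delta>)" unfolding chron_def using f(1,2) by blast
  obtain \<delta>' \<gamma>' where b: "\<delta>' > 0" "\<gamma>' 0 = x" "\<gamma>' ` {0..\<delta>'} \<subseteq> M" "continuous_on {0..\<delta>'} (\<lambda>t. T (\<gamma>' t))"
     "\<And>t. t \<in> {0..\<delta>'} \<Longrightarrow> (\<gamma>' has_vector_derivative ((-1::real) *\<^sub>R T (\<gamma>' t))) (at t within {0..\<delta>'})"
    using local_curve[OF sst xM, of "-1"] by auto
  define \<eta> where "\<eta> t = \<gamma>' (- t)" for t
  have img: "uminus ` {-\<delta>'..0} = {0..\<delta>'}" by auto
  have "tfd_curve M D g T (-\<delta>') 0 \<eta>"
  proof (rule tfd_from_C1)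
    show "- \<delta>' < 0" using b(1) by simp
    show "\<eta> ` {- \<delta>'..0} \<subseteq> M" using b(3) unfolding \<eta>_def by auto
    show "continuous_on {- \<delta>'..0} (\<lambda>t. T (\<eta> t))"
      unfolding \<eta>_def
      by (rule continuous_on_compose2[OF b(4), of _ "\<lambda>t. - t", unfolded o_def]) (auto intro: continuous_intros)
    show "(\<eta> has_vector_derivative T (\<eta> t)) (at t within {- \<delta>'..0})" if t: "t \<in> {- \<delta>'..0}" for t
    proof -
      have d1: "(uminus has_vector_derivative (-1)) (at t within {- \<delta>'..0})"
        by (auto intro!: derivative_eq_intros simp: has_vector_derivative_def)
      have d2: "(\<gamma>' has_vector_derivative ((-1::real) *\<^sub>R T (\<gamma>' (- t)))) (at (uminus t) within uminus ` {- \<delta>'..0})"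
        unfolding img using b(5)[of "-t"] t by auto
      from vector_diff_chain_within[OF d1 d2]
      show ?thesis unfolding \<eta>_def o_def by simp
    qed
    show "T (\<eta> t) \<in> D (\<eta> t) \<and> g (\<eta> t) (T (\<eta> t)) (T (\<eta> t)) < 0 \<and> g (\<eta> t) (T (\<eta> t)) (T (\<eta> t)) < 0"
      if "t \<in> {- \<delta>'<..<0}" for t
    proof -
      have "\<eta> t \<in> M" using b(3) that unfolding \<eta>_def by auto
      then show ?thesis using TD0 by auto
    qed
  qed
  moreover have "\<eta> 0 = x" using b(2) by (simp add: \<eta>_def)
  moreover have "- \<delta>' < 0" using b(1) by simp
  ultimately have bw: "chron M D g T (\<eta> (-\<delta>')) x" unfolding chron_def by blast
  show ?thesis using fw bw by blast
qed


theorem lemma3p7: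
  fixes M :: "'e::euclidean_space set" and D :: "'e \<Rightarrow> 'e set" and k :: nat
    and g :: "'e \<Rightarrow> 'e \<Rightarrow> 'e \<Rightarrow> real" and T :: "'e \<Rightarrow> 'e"
  assumes "sub_space_time TYPE('d::euclidean_space) M D k g T"
    and "chronologically_open M D g T"
  shows "\<exists>X :: 'e topology. topspace X = M \<and>
           (\<forall>p\<in>M. \<forall>q\<in>M. openin X (Ifut M D g T p \<inter> Ipast M D g T q)) \<and>
           (\<forall>U. openin X U \<longrightarrow>
              (\<exists>\<B>. \<B> \<subseteq> {Ifut M D g T p \<inter> Ipast M D g T q | p q. p \<in> M \<and> q \<in> M} \<and> \<Union>\<B> = U))"
  by (rule topology_part[OF assms(2) through[OF assms(1)]])

end
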